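(* For every $k\geq 4$, the group $\mathrm{PFB}_k$ is not virtually a product of two infinite groups.
   Context: $\mathrm{FB}_k=\langle \sigma_1,\ldots,\sigma_{k-1}\mid \sigma_i^2=1,\ [\sigma_i,\sigma_j]=1 \text{ whenever } |i-j|\ge 2\rangle$, and $\mathrm{PFB}_k$ is the kernel of the homomorphism $\mathrm{FB}_k\to\mathrm{Sym}(k)$ sending $\sigma_i$ to $(i,i+1)$. *)

theory Defs
  imports "HOL-Algebra.Algebra" "HOL-Combinatorics.Transposition"
begin

text \<open>Elementary moves of the presentation of FB_k on words over the
  generators 1..k-1 (letter i stands for sigma_i): cancel sigma_i sigma_i,
  and commute sigma_i sigma_j when |i-j| >= 2.\<close>
inductive fb_step :: "nat \<Rightarrow> nat list \<Rightarrow> nat list \<Rightarrow> bool" for k where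
  cancel: "i \<in> {1..<k} \<Longrightarrow> fb_step k (xs @ [i, i] @ ys) (xs @ ys)"
| comm: "i \<in> {1..<k} \<Longrightarrow> j \<in> {1..<k} \<Longrightarrow> 2 \<le> \<bar>int i - int j\<bar> \<Longrightarrow>
         fb_step k (xs @ [i, j] @ ys) (xs @ [j, i] @ ys)"

definition fb_eq :: "nat \<Rightarrow> nat list \<Rightarrow> nat list \<Rightarrow> bool" where
  "fb_eq k = (sup (fb_step k) (fb_step k)\<inverse>\<inverse>)\<^sup>*\<^sup>*"

definition fb_class :: "nat \<Rightarrow> nat list \<Rightarrow> nat list set" where
  "fb_class k w = {v. fb_eq k w v}"

definition fb_mult :: "nat \<Rightarrow> nat list set \<Rightarrow> nat list set \<Rightarrow> nat list set" where
  "fb_mult k P Q = {v. \<exists>p\<in>P. \<exists>q\<in>Q. fb_eq k (p @ q) v}"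

text \<open>FB_k as the group presented by the given generators and relations
  (since all generators are involutions, the quotient of the free monoid is
  the presented group).\<close>
definition FB :: "nat \<Rightarrow> nat list set monoid" where
  "FB k = \<lparr> carrier = {fb_class k w | w. set w \<subseteq> {1..<k}},
            monoid.mult = fb_mult k,
            monoid.one = fb_class k [] \<rparr>"

definition perm_of_word :: "nat list \<Rightarrow> nat \<Rightarrow> nat" where
  "perm_of_word w = foldr (\<lambda>i p. transpose i (Suc i) \<circ> p) w id"

definition PFB :: "nat \<Rightarrow> nat list set monoid" where
  "PFB k = FB k \<lparr> carrier := {C \<in> carrier (FB k). \<forall>w\<in>C. perm_of_word w = id} \<rparr>"

end

theory Submission
  imports Defs
begin


definition dep :: "nat \<Rightarrow> nat \<Rightarrow> bool" where
  "dep a b \<longleftrightarrow> a \<le> Suc b \<and> b \<le> Suc a"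

lemma dep_sym: "dep a b = dep b a" by (auto simp: dep_def)
lemma dep_refl[simp]: "dep a a" by (auto simp: dep_def)

definition pj :: "nat \<Rightarrow> nat \<Rightarrow> nat list \<Rightarrow> nat list" where
  "pj a b w = filter (\<lambda>x. x = a \<or> x = b) w"

definition teq :: "nat list \<Rightarrow> nat list \<Rightarrow> bool" where
  "teq u v \<longleftrightarrow> (\<forall>a b. dep a b \<longrightarrow> pj a b u = pj a b v)"

lemma teq_refl[simp]: "teq u u" by (simp add: teq_def)
lemma teq_sym: "teq u v \<Longrightarrow> teq v u" by (simp add: teq_def)
lemma teq_trans: "teq u v \<Longrightarrow> teq v w \<Longrightarrow> teq u w" by (simp add: teq_def)

lemma teq_append: "teq u u' \<Longrightarrow> teq v v' \<Longrightarrow> teq (u @ v) (u' @ v')"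
  by (simp add: teq_def pj_def)

lemma teq_Cons: "teq u v \<Longrightarrow> teq (a # u) (a # v)"
  using teq_append[of "[a]" "[a]" u v] by simp

lemma teq_Cons_cancel: "teq (a # u) (a # v) \<Longrightarrow> teq u v"
  by (auto simp: teq_def pj_def split: if_splits)

lemma teq_append_cancel: "teq (w @ u) (w @ v) \<Longrightarrow> teq u v"
  by (induction w) (auto dest: teq_Cons_cancel)

lemma teq_rev: "teq u v \<Longrightarrow> teq (rev u) (rev v)"
  by (auto simp: teq_def pj_def rev_filter[symmetric])

lemma teq_rev_iff: "teq (rev u) (rev v) = teq u v"
  using teq_rev by fastforce

lemma teq_move:
  assumes "\<forall>c\<in>set v1. \<not> dep a c"
  shows "teq (v1 @ a # v2) (a # v1 @ v2)"
  unfolding teq_def pj_def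
proof (intro allI impI)
  fix c d assume cd: "dep c d"
  show "filter (\<lambda>x. x = c \<or> x = d) (v1 @ a # v2) = filter (\<lambda>x. x = c \<or> x = d) (a # v1 @ v2)"
  proof (cases "a = c \<or> a = d")
    case True
    have "filter (\<lambda>x. x = c \<or> x = d) v1 = []"
      using assms True cd by (auto simp: filter_empty_conv dep_sym)
    then show ?thesis by simp
  next
    case False then show ?thesis by simp
  qed
qed

lemma teq_swap: "\<not> dep a b \<Longrightarrow> teq (x @ a # b # y) (x @ b # a # y)"
proof -
  assume "\<not> dep a b"
  then have "teq ([b] @ a # y) (a # [b] @ y)" by (intro teq_move) (simp add: dep_sym)
  then have "teq (a # b # y) (b # a # y)" by (simp add: teq_sym)
  then show ?thesis by (rule teq_append[OF teq_refl])
qed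

lemma teq_split:
  assumes "teq v (a # u)"
  shows "\<exists>v1 v2. v = v1 @ a # v2 \<and> a \<notin> set v1 \<and> (\<forall>c\<in>set v1. \<not> dep a c) \<and> teq (v1 @ v2) u"
proof -
  have "pj a a v = pj a a (a # u)" using assms by (simp add: teq_def)
  then have "a \<in> set v" by (auto simp: pj_def filter_eq_Cons_iff)
  then obtain v1 v2 where v: "v = v1 @ a # v2" and na: "a \<notin> set v1"
    by (meson split_list_first)
  have ind: "\<forall>c\<in>set v1. \<not> dep a c"
  proof
    fix c assume c: "c \<in> set v1"
    show "\<not> dep a c"
    proof
      assume d: "dep a c"
      have "pj a c v = pj a c (a # u)" using assms d by (simp add: teq_def)
      moreover have "pj a c (a # u) = a # pj a c u" by (simp add: pj_def)
      moreover obtain w1 w2 where "v1 = w1 @ c # w2" "c \<notin> set w1" using c by (meson split_list_first)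
      moreover have "filter (\<lambda>x. x = a \<or> x = c) w1 = []" using \<open>v1 = w1 @ c # w2\<close> na \<open>c \<notin> set w1\<close>
        by (auto simp: filter_empty_conv)
      ultimately show False using v na c by (auto simp: pj_def)
    qed
  qed
  have "teq v (a # v1 @ v2)" using v teq_move[OF ind] by simp
  then have "teq (a # v1 @ v2) (a # u)" using assms teq_sym teq_trans by blast
  then have "teq (v1 @ v2) u" by (rule teq_Cons_cancel)
  then show ?thesis using v na ind by blast
qed

lemma teq_length: "teq u v \<Longrightarrow> length u = length v"
proof (induction u arbitrary: v)
  case Nil
  then show ?case
  proof (cases v)
    case (Cons b w)
    have "pj b b [] = pj b b v" using Nil by (simp add: teq_def)
    then show ?thesis using Cons by (simp add: pj_def)
  qed simp
next
  case (Cons a u)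
  from teq_split[OF teq_sym[OF Cons.prems]] obtain v1 v2 where
    "v = v1 @ a # v2" "teq (v1 @ v2) u" by blast
  with Cons.IH[of "v1 @ v2"] teq_sym show ?case by fastforce
qed

lemma teq_set: "teq u v \<Longrightarrow> set u = set v"
proof -
  assume t: "teq u v"
  have "x \<in> set u \<longleftrightarrow> x \<in> set v" for x
  proof -
    have "pj x x u = pj x x v" using t by (simp add: teq_def)
    then show ?thesis by (metis (mono_tags) filter_empty_conv pj_def)
  qed
  then show ?thesis by blast
qed


definition nonred :: "nat list \<Rightarrow> bool" where
  "nonred w \<longleftrightarrow> (\<exists>x a y. teq w (x @ a # a # y))"

abbreviation red :: "nat list \<Rightarrow> bool" where "red w \<equiv> \<not> nonred w"

lemma nonred_teq: "teq u v \<Longrightarrow> nonred u = nonred v"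
  unfolding nonred_def by (meson teq_sym teq_trans)

lemma nonred_append1: "nonred x \<Longrightarrow> nonred (x @ y)"
  unfolding nonred_def by (metis append.assoc append_Cons teq_append teq_refl)

lemma nonred_append2: "nonred y \<Longrightarrow> nonred (x @ y)"
  unfolding nonred_def by (metis append.assoc teq_append teq_refl)

lemma red_appendD: "red (x @ y) \<Longrightarrow> red x \<and> red y"
  using nonred_append1 nonred_append2 by blast

lemma nonred_rev: "nonred (rev w) = nonred w"
proof -
  have "nonred w \<Longrightarrow> nonred (rev w)" for w
    unfolding nonred_def
    by (metis append.assoc append_Cons append_Nil rev.simps(2) rev_append teq_rev)
  from this[of w] this[of "rev w"] show ?thesis by auto
qed

lemma split_occ:
  assumes "A @ C = v1 @ d # v2"
  shows "(\<exists>A2. A = v1 @ d # A2 \<and> v2 = A2 @ C) \<or> (\<exists>C1. v1 = A @ C1 \<and> C = C1 @ d # v2)"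
proof -
  from assms obtain us where "A = v1 @ us \<and> us @ C = d # v2 \<or> A @ us = v1 \<and> C = us @ d # v2"
    unfolding append_eq_append_conv2 by blast
  then show ?thesis
  proof
    assume h: "A = v1 @ us \<and> us @ C = d # v2"
    show ?thesis
    proof (cases us)
      case Nil then show ?thesis using h by auto
    next
      case (Cons x us') then show ?thesis using h by auto
    qed
  qed blast
qed

lemma red_Cons:
  assumes "red r" "\<not> (\<exists>t. teq r (a # t))"
  shows "red (a # r)"
proof
  assume "nonred (a # r)"
  then obtain x b y where t: "teq (x @ b # b # y) (a # r)"
    unfolding nonred_def using teq_sym by blast
  from teq_split[OF t] obtain v1 v2 where
    s: "x @ b # b # y = v1 @ a # v2" "a \<notin> set v1" "\<forall>c\<in>set v1. \<not> dep a c" "teq (v1 @ v2) r"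
    by blast
  have nr: "nonred (v1 @ v2) \<Longrightarrow> False" using assms(1) nonred_teq[OF s(4)] by simp
  from split_occ[OF s(1)] show False
  proof
    assume "\<exists>A2. x = v1 @ a # A2 \<and> v2 = A2 @ b # b # y"
    then obtain A2 where "v2 = A2 @ b # b # y" by blast
    then have "v1 @ v2 = (v1 @ A2) @ b # b # y" by simp
    then show False using nr unfolding nonred_def by (metis teq_refl)
  next
    assume "\<exists>C1. v1 = x @ C1 \<and> b # b # y = C1 @ a # v2"
    then obtain C1 where C1: "v1 = x @ C1" "b # b # y = C1 @ a # v2" by blast
    show False
    proof (cases C1)
      case Nil
      then have "a = b" "v2 = b # y" using C1 by auto
      then have "teq r (a # x @ y)" using teq_move[OF s(3)] s(4) C1 Nil
        by (metis append_Nil2 teq_sym teq_trans)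
      then show False using assms(2) by blast
    next
      case (Cons c C2)
      show False
      proof (cases C2)
        case Nil
        then show False using C1 Cons s(2) by auto
      next
        case (Cons e C3)
        then have "v1 @ v2 = x @ b # b # (C3 @ v2)" using C1 \<open>C1 = c # C2\<close> by auto
        then show False using nr unfolding nonred_def by (metis teq_refl)
      qed
    qed
  qed
qed

definition act :: "nat \<Rightarrow> nat list \<Rightarrow> nat list" where
  "act a r = (if \<exists>t. teq r (a # t) then (SOME t. teq r (a # t)) else a # r)"

lemma act_cancel: "teq r (a # t) \<Longrightarrow> teq (act a r) t"
proof -
  assume h: "teq r (a # t)"
  then have "teq r (a # (SOME t. teq r (a # t)))" by (rule someI)
  then have "teq (a # (SOME t. teq r (a # t))) (a # t)" using h teq_sym teq_trans by blast
  then show ?thesis using h unfolding act_def by (auto dest: teq_Cons_cancel)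
qed

lemma act_nocancel: "\<not> (\<exists>t. teq r (a # t)) \<Longrightarrow> act a r = a # r"
  by (simp add: act_def)

lemma red_act: "red r \<Longrightarrow> red (act a r)"
proof (cases "\<exists>t. teq r (a # t)")
  case True
  assume r: "red r"
  then obtain t where t: "teq r (a # t)" using True by blast
  then have "red (a # t)" using r nonred_teq by blast
  then have "red t" using red_appendD[of "[a]" t] by simp
  then show ?thesis using act_cancel[OF t] nonred_teq by blast
next
  case False
  assume "red r"
  then show ?thesis using red_Cons[OF _ False] act_nocancel[OF False] by simp
qed

lemma act_teq: "teq r s \<Longrightarrow> teq (act a r) (act a s)"
proof (cases "\<exists>t. teq r (a # t)")
  case True
  assume rs: "teq r s"
  then obtain t where t: "teq r (a # t)" using True by blast
  then have t2: "teq s (a # t)" using rs teq_sym teq_trans by blast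
  show ?thesis using act_cancel[OF t] act_cancel[OF t2] teq_sym teq_trans by blast
next
  case False
  assume rs: "teq r s"
  then have F2: "\<not> (\<exists>t. teq s (a # t))" using False teq_trans by blast
  show ?thesis using act_nocancel[OF False] act_nocancel[OF F2] teq_Cons[OF rs] by simp
qed

lemma act_act: "red r \<Longrightarrow> teq (act a (act a r)) r"
proof (cases "\<exists>t. teq r (a # t)")
  case True
  assume r: "red r"
  then obtain t where t: "teq r (a # t)" using True by blast
  have c: "teq (act a r) t" by (rule act_cancel[OF t])
  have "\<not> (\<exists>t'. teq (act a r) (a # t'))"
  proof
    assume "\<exists>t'. teq (act a r) (a # t')"
    then obtain t' where "teq (act a r) (a # t')" by blast
    then have "teq t (a # t')" using c teq_sym teq_trans by blast
    then have "teq r (a # a # t')" using t teq_Cons teq_trans by blast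
    then have "nonred r" unfolding nonred_def by (metis append_Nil)
    then show False using r by simp
  qed
  then have "act a (act a r) = a # act a r" by (rule act_nocancel)
  then show ?thesis using teq_Cons[OF c] t teq_sym teq_trans by metis
next
  case False
  then have "act a r = a # r" by (rule act_nocancel)
  then show ?thesis using act_cancel[of "a # r" a r] by simp
qed

lemma not_teq_Cons_Cons:
  assumes "\<not> (\<exists>t. teq r (a # t))" "a \<noteq> b"
  shows "\<not> (\<exists>t. teq (b # r) (a # t))"
proof
  assume "\<exists>t. teq (b # r) (a # t)"
  then obtain t where "teq (b # r) (a # t)" by blast
  from teq_split[OF this] obtain v1 v2 where
    s: "b # r = v1 @ a # v2" "\<forall>c\<in>set v1. \<not> dep a c" by blast
  then obtain v1' where "v1 = b # v1'" using assms(2) by (cases v1) auto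
  then have "r = v1' @ a # v2" "\<forall>c\<in>set v1'. \<not> dep a c" using s by auto
  then have "teq r (a # v1' @ v2)" using teq_move by simp
  then show False using assms(1) by blast
qed

lemma act_comm:
  assumes ab: "\<not> dep a b"
  shows "teq (act a (act b r)) (act b (act a r))"
proof -
  have anb: "a \<noteq> b" using ab by auto
  have swap: "teq (a # b # w) (b # a # w)" for w using teq_swap[OF ab, of "[]"] by simp
  consider (both) "\<exists>t. teq r (a # t)" "\<exists>t. teq r (b # t)"
    | (onlya) "\<exists>t. teq r (a # t)" "\<not> (\<exists>t. teq r (b # t))"
    | (onlyb) "\<not> (\<exists>t. teq r (a # t))" "\<exists>t. teq r (b # t)"
    | (neither) "\<not> (\<exists>t. teq r (a # t))" "\<not> (\<exists>t. teq r (b # t))" by blast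
  then show ?thesis
  proof cases
    case both
    then obtain ra rb where ra: "teq r (a # ra)" and rb: "teq r (b # rb)" by blast
    then have "teq (b # rb) (a # ra)" using teq_sym teq_trans by blast
    from teq_split[OF this] obtain v1 v2 where
      s: "b # rb = v1 @ a # v2" "\<forall>c\<in>set v1. \<not> dep a c" "teq (v1 @ v2) ra" by blast
    then obtain v1' where v1: "v1 = b # v1'" using anb by (cases v1) auto
    define t where "t = v1' @ v2"
    have rbt: "teq rb (a # t)" using s v1 teq_move[of v1' a v2] by (simp add: t_def)
    have rat: "teq ra (b # t)" using s(3) v1 teq_sym by (simp add: t_def)
    have 1: "teq (act b r) (a # t)" using act_cancel[OF rb] rbt teq_trans by blast
    have 2: "teq (act a r) (b # t)" using act_cancel[OF ra] rat teq_trans by blast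
    show ?thesis using act_cancel[OF 1] act_cancel[OF 2] teq_sym teq_trans by blast
  next
    case onlya
    then obtain ra where ra: "teq r (a # ra)" by blast
    have e1: "act b r = b # r" using onlya act_nocancel by blast
    have "teq (b # r) (a # b # ra)" using teq_Cons[OF ra] swap teq_sym teq_trans by blast
    then have L: "teq (act a (act b r)) (b # ra)" using e1 act_cancel by simp
    have c: "teq (act a r) ra" by (rule act_cancel[OF ra])
    have "\<not> (\<exists>z. teq (act a r) (b # z))"
    proof
      assume "\<exists>z. teq (act a r) (b # z)"
      then obtain z where "teq (act a r) (b # z)" by blast
      then have "teq ra (b # z)" using c teq_sym teq_trans by blast
      then have "teq r (a # b # z)" using ra teq_Cons teq_trans by blast
      then have "teq r (b # a # z)" using swap teq_trans by blast
      then show False using onlya by blast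
    qed
    then have "act b (act a r) = b # act a r" by (rule act_nocancel)
    then show ?thesis using L teq_Cons[OF c] teq_sym teq_trans by metis
  next
    case onlyb
    then obtain rb where rb: "teq r (b # rb)" by blast
    have e1: "act a r = a # r" using onlyb act_nocancel by blast
    have "teq (a # r) (b # a # rb)" using teq_Cons[OF rb] swap teq_sym teq_trans by blast
    then have L: "teq (act b (act a r)) (a # rb)" using e1 act_cancel by simp
    have c: "teq (act b r) rb" by (rule act_cancel[OF rb])
    have "\<not> (\<exists>z. teq (act b r) (a # z))"
    proof
      assume "\<exists>z. teq (act b r) (a # z)"
      then obtain z where "teq (act b r) (a # z)" by blast
      then have "teq rb (a # z)" using c teq_sym teq_trans by blast
      then have "teq r (b # a # z)" using rb teq_Cons teq_trans by blast
      then have "teq r (a # b # z)" using swap teq_sym teq_trans by blast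
      then show False using onlyb by blast
    qed
    then have "act a (act b r) = a # act b r" by (rule act_nocancel)
    then show ?thesis using L teq_Cons[OF c] teq_sym teq_trans by metis
  next
    case neither
    have e1: "act b r = b # r" "act a r = a # r" using neither act_nocancel by blast+
    have "act a (b # r) = a # b # r"
      using not_teq_Cons_Cons[OF neither(1) anb] act_nocancel by blast
    moreover have "act b (a # r) = b # a # r"
      using not_teq_Cons_Cons[OF neither(2) anb[symmetric]] act_nocancel by blast
    ultimately show ?thesis using e1 swap by simp
  qed
qed

definition actw :: "nat list \<Rightarrow> nat list \<Rightarrow> nat list" where
  "actw w r = foldr act w r"

lemma actw_simps[simp]: "actw [] r = r" "actw (a # w) r = act a (actw w r)"
  "actw (u @ v) r = actw u (actw v r)"
  by (simp_all add: actw_def)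

lemma red_actw: "red r \<Longrightarrow> red (actw w r)"
proof (induction w)
  case (Cons a w)
  then show ?case using red_act[of "actw w r" a] by simp
qed simp

lemma actw_teq: "teq r s \<Longrightarrow> teq (actw w r) (actw w s)"
  by (induction w) (auto intro: act_teq)

lemma actw_red_self: "red u \<Longrightarrow> teq (actw u []) u"
proof (induction u)
  case Nil then show ?case by simp
next
  case (Cons a u)
  have ru: "red u" using Cons.prems red_appendD[of "[a]" u] by simp
  have nc: "\<not> (\<exists>t. teq u (a # t))"
  proof
    assume "\<exists>t. teq u (a # t)"
    then obtain t where "teq u (a # t)" by blast
    then have "teq (a # u) ([] @ a # a # t)" using teq_Cons by simp
    then show False using Cons.prems unfolding nonred_def by blast
  qed
  have "teq (act a (actw u [])) (act a u)" using act_teq[OF Cons.IH[OF ru]] .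
  then show ?case using act_nocancel[OF nc] by simp
qed


fun chn :: "nat list \<Rightarrow> bool" where
  "chn (a # b # w) = (dep a b \<and> a \<noteq> b \<and> chn (b # w))"
| "chn _ = True"

lemma chain_Cons: "chn (a # w) \<Longrightarrow> chn w"
  by (cases w) auto

lemma chain_appendD: "chn (x @ y) \<Longrightarrow> chn y"
  by (induction x) (auto dest: chain_Cons)

lemma chain_last: "chn (C1 @ d # v2) \<Longrightarrow> C1 \<noteq> [] \<Longrightarrow> dep (last C1) d"
proof (induction C1)
  case (Cons a C1)
  then show ?case by (cases C1) (auto dest: chain_Cons)
qed simp

lemma chain_nodup2: "chn (x @ a # a # y) \<Longrightarrow> False"
  using chain_appendD[of x "a # a # y"] by simp

lemma chain_teq: "chn w \<Longrightarrow> teq w v \<Longrightarrow> w = v"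
proof (induction w arbitrary: v)
  case Nil
  then show ?case using teq_length by fastforce
next
  case (Cons a w)
  show ?case
  proof (cases v)
    case Nil
    then show ?thesis using teq_length[OF Cons.prems(2)] by simp
  next
    case (Cons c v')
    from teq_split[of "a # w" c v'] Cons.prems(2) Cons obtain w1 w2 where
      s: "a # w = w1 @ c # w2" "\<forall>x\<in>set w1. \<not> dep c x" "teq (w1 @ w2) v'" by blast
    have "w1 = []"
    proof (rule ccontr)
      assume "w1 \<noteq> []"
      then have "dep (last w1) c" using chain_last Cons.prems(1) s(1) by metis
      moreover have "last w1 \<in> set w1" using \<open>w1 \<noteq> []\<close> by simp
      ultimately show False using s(2) dep_sym by blast
    qed
    then have "a = c" "w = w2" using s(1) by auto
    then show ?thesis using Cons.IH[of v'] chain_Cons[OF Cons.prems(1)] s(3) \<open>w1 = []\<close> Cons by simp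
  qed
qed

lemma chain_red: "chn w \<Longrightarrow> red w"
  unfolding nonred_def using chain_teq chain_nodup2 by metis

lemma no_right_desc_Cons:
  assumes "dep a b" "a \<noteq> b"
  shows "\<not> (\<exists>z. teq (u @ [a]) (z @ [b]))"
proof
  assume "\<exists>z. teq (u @ [a]) (z @ [b])"
  then obtain z where "teq (u @ [a]) (z @ [b])" by blast
  then have "teq (a # rev u) (b # rev z)" using teq_rev by fastforce
  from teq_split[OF this] obtain v1 v2 where
    s: "a # rev u = v1 @ b # v2" "\<forall>c\<in>set v1. \<not> dep b c" by blast
  then obtain v1' where "v1 = a # v1'" using assms(2) by (cases v1) auto
  then show False using s(2) assms(1) dep_sym by auto
qed

lemma red_snoc:
  assumes "red u" "\<not> (\<exists>z. teq u (z @ [a]))"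
  shows "red (u @ [a])"
proof -
  have "red (rev u)" using assms(1) nonred_rev by simp
  moreover have "\<not> (\<exists>t. teq (rev u) (a # t))"
  proof
    assume "\<exists>t. teq (rev u) (a # t)"
    then obtain t where "teq (rev u) (a # t)" by blast
    then have "teq u (rev t @ [a])" using teq_rev by fastforce
    then show False using assms(2) by blast
  qed
  ultimately have "red (a # rev u)" by (rule red_Cons)
  then show ?thesis using nonred_rev[of "u @ [a]"] by simp
qed

lemma concat_red_chain:
  "red u \<Longrightarrow> chn (a # p) \<Longrightarrow> \<not> (\<exists>z. teq u (z @ [a])) \<Longrightarrow> red (u @ a # p)"
proof (induction p arbitrary: u a)
  case Nil
  then show ?case using red_snoc by simp
next
  case (Cons b p)
  have r: "red (u @ [a])" using red_snoc Cons.prems by blast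
  have "dep a b" "a \<noteq> b" "chn (b # p)" using Cons.prems(2) by auto
  then have "\<not> (\<exists>z. teq (u @ [a]) (z @ [b]))" using no_right_desc_Cons by blast
  from Cons.IH[OF r \<open>chn (b # p)\<close> this] show ?case by simp
qed

lemma cancel_chain:
  "red u \<Longrightarrow> chn p \<Longrightarrow> \<exists>r u'. r \<le> length p \<and> r \<le> length u \<and>
      teq u (u' @ rev (take r p)) \<and> red (u' @ drop r p)"
proof (induction p arbitrary: u)
  case Nil
  then show ?case by (intro exI[of _ 0] exI[of _ u]) simp
next
  case (Cons a p)
  show ?case
  proof (cases "\<exists>z. teq u (z @ [a])")
    case True
    then obtain z where z: "teq u (z @ [a])" by blast
    then have "red (z @ [a])" using Cons.prems(1) nonred_teq by blast
    then have rz: "red z" using red_appendD by blast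
    from Cons.IH[OF rz chain_Cons[OF Cons.prems(2)]] obtain r u' where
      h: "r \<le> length p" "r \<le> length z" "teq z (u' @ rev (take r p))" "red (u' @ drop r p)" by blast
    have lu: "length u = Suc (length z)" using teq_length[OF z] by simp
    have "teq u (u' @ rev (take r p) @ [a])"
      using teq_trans[OF z teq_append[OF h(3) teq_refl[of "[a]"]]] by simp
    then show ?thesis using h lu
      by (intro exI[of _ "Suc r"] exI[of _ u']) simp
  next
    case False
    then show ?thesis using concat_red_chain[OF Cons.prems(1) Cons.prems(2) False]
      by (intro exI[of _ 0] exI[of _ u]) simp
  qed
qed

lemma peel1:
  "teq (A @ C) (D @ B) \<Longrightarrow> chn C \<Longrightarrow> \<exists>i A'. i \<le> length D \<and> teq A (take i D @ A') \<and>
     teq (A' @ C) (drop i D @ B) \<and>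
     (i = length D \<or> (C \<noteq> [] \<and> D ! i = hd C \<and> (\<forall>c\<in>set A'. \<not> dep (hd C) c)))"
proof (induction D arbitrary: A)
  case Nil
  then show ?case by (intro exI[of _ 0] exI[of _ A]) simp
next
  case (Cons d D)
  from teq_split[of "A @ C" d "D @ B"] Cons.prems(1) obtain v1 v2 where
    s: "A @ C = v1 @ d # v2" "\<forall>c\<in>set v1. \<not> dep d c" "teq (v1 @ v2) (D @ B)" by auto
  from split_occ[OF s(1)] show ?case
  proof
    assume "\<exists>A2. A = v1 @ d # A2 \<and> v2 = A2 @ C"
    then obtain A2 where A: "A = v1 @ d # A2" "v2 = A2 @ C" by blast
    have tA: "teq A (d # v1 @ A2)" using A teq_move[OF s(2)] by simp
    have "teq ((v1 @ A2) @ C) (D @ B)" using s(3) A by simp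
    from Cons.IH[OF this Cons.prems(2)] obtain i A' where
      h: "i \<le> length D" "teq (v1 @ A2) (take i D @ A')" "teq (A' @ C) (drop i D @ B)"
         "i = length D \<or> (C \<noteq> [] \<and> D ! i = hd C \<and> (\<forall>c\<in>set A'. \<not> dep (hd C) c))" by blast
    have "teq A (take (Suc i) (d # D) @ A')"
      using teq_trans[OF tA teq_Cons[OF h(2)]] by simp
    then show ?thesis using h by (intro exI[of _ "Suc i"] exI[of _ A']) auto
  next
    assume "\<exists>C1. v1 = A @ C1 \<and> C = C1 @ d # v2"
    then obtain C1 where C: "v1 = A @ C1" "C = C1 @ d # v2" by blast
    have "C1 = []"
    proof (rule ccontr)
      assume "C1 \<noteq> []"
      then have "dep (last C1) d" using chain_last Cons.prems(2) C(2) by metis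
      moreover have "last C1 \<in> set v1" using \<open>C1 \<noteq> []\<close> C(1) by simp
      ultimately show False using s(2) dep_sym by blast
    qed
    then show ?thesis using C s(2) Cons.prems(1)
      by (intro exI[of _ 0] exI[of _ A]) auto
  qed
qed

lemma peel2:
  "teq (A' @ C) (D @ B) \<Longrightarrow> chn C \<Longrightarrow> chn D \<Longrightarrow> length D \<le> length C \<Longrightarrow>
   (D \<noteq> [] \<longrightarrow> hd D = hd C \<and> (\<forall>c\<in>set A'. \<not> dep (hd C) c)) \<Longrightarrow>
   \<exists>C''. C = D @ C'' \<and> (\<forall>c\<in>set A'. \<forall>d\<in>set D. \<not> dep d c)"
proof (induction D arbitrary: C)
  case Nil
  then show ?case by simp
next
  case (Cons d D)
  have hd1: "hd (d # D) = hd C" "\<forall>c\<in>set A'. \<not> dep (hd C) c" using Cons.prems(5) by auto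
  obtain C' where C: "C = d # C'" using Cons.prems(4) hd1(1) by (cases C) auto
  have ind: "\<forall>c\<in>set A'. \<not> dep d c" using hd1(2) C by simp
  have "teq (A' @ d # C') (d # A' @ C')" by (rule teq_move[OF ind])
  moreover have "teq (A' @ d # C') (d # D @ B)" using Cons.prems(1) C by simp
  ultimately have "teq (d # A' @ C') (d # D @ B)" using teq_sym teq_trans by blast
  then have t: "teq (A' @ C') (D @ B)" by (rule teq_Cons_cancel)
  have cC': "chn C'" using Cons.prems(2) C chain_Cons by simp
  have cD: "chn D" using Cons.prems(3) chain_Cons by simp
  have hyp: "D \<noteq> [] \<longrightarrow> hd D = hd C' \<and> (\<forall>c\<in>set A'. \<not> dep (hd C') c)"
  proof
    assume "D \<noteq> []"
    then obtain d' D' where D: "D = d' # D'" by (cases D) auto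
    have dd: "dep d d'" using Cons.prems(3) D by simp
    from teq_split[of "A' @ C'" d' "D' @ B"] t D obtain v1 v2 where
      s: "A' @ C' = v1 @ d' # v2" "\<forall>c\<in>set v1. \<not> dep d' c" by auto
    from split_occ[OF s(1)] show "hd D = hd C' \<and> (\<forall>c\<in>set A'. \<not> dep (hd C') c)"
    proof
      assume "\<exists>A2. A' = v1 @ d' # A2 \<and> v2 = A2 @ C'"
      then have "d' \<in> set A'" by auto
      then show ?thesis using ind dd by blast
    next
      assume "\<exists>C1. v1 = A' @ C1 \<and> C' = C1 @ d' # v2"
      then obtain C1 where C1: "v1 = A' @ C1" "C' = C1 @ d' # v2" by blast
      have "C1 = []"
      proof (rule ccontr)
        assume "C1 \<noteq> []"
        then have "dep (last C1) d'" using chain_last cC' C1(2) by metis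
        moreover have "last C1 \<in> set v1" using \<open>C1 \<noteq> []\<close> C1(1) by simp
        ultimately show False using s(2) dep_sym by blast
      qed
      then show ?thesis using C1 s(2) D by auto
    qed
  qed
  have "length D \<le> length C'" using Cons.prems(4) C by simp
  from Cons.IH[OF t cC' cD this hyp] obtain C'' where
    "C' = D @ C''" "\<forall>c\<in>set A'. \<forall>d\<in>set D. \<not> dep d c" by blast
  then show ?case using C ind by (intro exI[of _ C'']) simp
qed


definition bf :: "nat \<Rightarrow> nat \<Rightarrow> nat" where
  "bf n m = (if m < n then Suc m else 2 * n - 1 - m)"

definition zz :: "nat \<Rightarrow> nat \<Rightarrow> nat" where
  "zz n j = bf n (j mod (2 * n - 2))"

lemma zz_periodic: "zz n (j + (2 * n - 2)) = zz n j"
  by (simp add: zz_def)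

lemma zz_periodic_mult: "zz n (a * (2 * n - 2) + j) = zz n j"
  by (simp add: zz_def)

lemma chain_ConsI: "chn w \<Longrightarrow> (w \<noteq> [] \<Longrightarrow> dep x (hd w) \<and> x \<noteq> hd w) \<Longrightarrow> chn (x # w)"
  by (cases w) auto

lemma chain_map_upt:
  assumes "\<And>j. dep (f j) (f (Suc j)) \<and> f j \<noteq> f (Suc j)"
  shows "chn (map f [a..<b])"
proof (induction "b - a" arbitrary: a)
  case 0 then show ?case by simp
next
  case (Suc x)
  then have ab: "a < b" by simp
  have IH: "chn (map f [Suc a..<b])" using Suc by simp
  have e: "[a..<b] = a # [Suc a..<b]" using ab by (simp add: upt_conv_Cons)
  show ?case unfolding e
    by (auto intro!: chain_ConsI[OF IH] simp: assms upt_conv_Cons)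
qed

lemma zz_range: "2 \<le> n \<Longrightarrow> zz n j \<in> {1..n}"
proof -
  assume n: "2 \<le> n"
  have "bf n m \<in> {1..n}" if "m < 2 * n - 2" for m
    using that n unfolding bf_def by (cases "m < n") (simp_all, arith)
  moreover have "j mod (2 * n - 2) < 2 * n - 2" using n by simp
  ultimately show ?thesis unfolding zz_def by blast
qed

lemma zz_adj: "2 \<le> n \<Longrightarrow> dep (zz n j) (zz n (Suc j)) \<and> zz n j \<noteq> zz n (Suc j)"
proof -
  assume n: "2 \<le> n"
  define P where "P = 2 * n - 2"
  define m where "m = j mod P"
  have mP: "m < P" using n by (simp add: m_def P_def)
  have s: "Suc j mod P = (if Suc m = P then 0 else Suc m)" by (simp add: m_def mod_Suc)
  have "dep (bf n m) (bf n (if Suc m = P then 0 else Suc m)) \<and> bf n m \<noteq> bf n (if Suc m = P then 0 else Suc m)"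
  proof (cases "Suc m = P")
    case True
    then show ?thesis using n unfolding bf_def dep_def P_def by simp arith
  next
    case False
    then show ?thesis using n mP unfolding bf_def dep_def P_def
      by (cases "m < n"; cases "Suc m < n"; simp; arith)
  qed
  then show ?thesis
    unfolding zz_def P_def[symmetric] m_def[symmetric] s .
qed

lemma bf_det:
  assumes n: "2 \<le> n" and m1: "m1 < 2 * n - 2" and m2: "m2 < 2 * n - 2"
    and e1: "bf n m1 = bf n m2"
    and e2: "bf n (if Suc m1 = 2 * n - 2 then 0 else Suc m1) = bf n (if Suc m2 = 2 * n - 2 then 0 else Suc m2)"
  shows "m1 = m2"
proof (cases "m1 < n")
  case c1: True
  show ?thesis
  proof (cases "m2 < n")
    case True then show ?thesis using e1 c1 by (simp add: bf_def)
  next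
    case False
    then have b2: "bf n m2 = 2 * n - 1 - m2" by (simp add: bf_def)
    have "m1 + m2 = 2 * n - 2" using e1 c1 b2 m2 False by (simp add: bf_def)
    then show ?thesis using e2 c1 False m1 m2 n unfolding bf_def by (auto split: if_splits)
  qed
next
  case c1: False
  show ?thesis
  proof (cases "m2 < n")
    case True
    have "m1 + m2 = 2 * n - 2" using e1 c1 True m1 by (simp add: bf_def)
    then show ?thesis using e2 c1 True m1 m2 n unfolding bf_def by (auto split: if_splits)
  next
    case False then show ?thesis using e1 c1 m1 m2 by (simp add: bf_def)
  qed
qed

lemma chain_zz: "2 \<le> n \<Longrightarrow> chn (map (zz n) [a..<b])"
  by (rule chain_map_upt) (rule zz_adj)

lemma zz_det:
  assumes n: "2 \<le> n" and e1: "zz n i = zz n r" and e2: "zz n (Suc i) = zz n (Suc r)"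
  shows "i mod (2 * n - 2) = r mod (2 * n - 2)"
proof -
  define P where "P = 2 * n - 2"
  have s: "Suc j mod P = (if Suc (j mod P) = P then 0 else Suc (j mod P))" for j by (simp add: mod_Suc)
  have P: "0 < P" using n by (simp add: P_def)
  show ?thesis
    using bf_det[OF n, of "i mod P" "r mod P"] e1 e2 P unfolding zz_def P_def[symmetric] s
    by (simp add: P_def)
qed

lemma zz_cover:
  assumes n: "2 \<le> n" and v: "v \<in> {1..n}"
  shows "\<exists>t < 2 * n - 2. zz n (i + t) = v"
proof -
  define P where "P = 2 * n - 2"
  have P: "0 < P" using n by (simp add: P_def)
  define w where "w = v - 1"
  have w: "w < P" "bf n w = v" using v n by (auto simp: w_def P_def bf_def)
  define q where "q = i mod P"
  have q: "q < P" using P by (simp add: q_def)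
  have i: "i = (i div P) * P + q" by (simp add: q_def)
  obtain t where t: "t < P" "q + t = w \<or> q + t = w + P"
  proof (cases "q \<le> w")
    case True
    then show ?thesis using that[of "w - q"] w q by simp
  next
    case False
    then show ?thesis using that[of "w + P - q"] w q by simp
  qed
  have "(i + t) mod P = w"
  proof -
    have "i + t = (i div P) * P + (q + t)" using i by simp
    then have "(i + t) mod P = (q + t) mod P" by (metis mod_mult_self3)
    then show ?thesis using t w by auto
  qed
  then have "zz n (i + t) = v" using w by (simp add: zz_def P_def[symmetric])
  then show ?thesis using t by (auto simp: P_def)
qed

lemma map_zz_append:
  "map (zz n) [0..<a * (2 * n - 2)] @ map (zz n) [0..<b] = map (zz n) [0..<a * (2 * n - 2) + b]"
proof -
  have "map (zz n) [a * (2 * n - 2)..<a * (2 * n - 2) + b] = map (zz n) [0..<b]"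
  proof (rule nth_equalityI)
    fix j assume "j < length (map (zz n) [a * (2 * n - 2)..<a * (2 * n - 2) + b])"
    then show "map (zz n) [a * (2 * n - 2)..<a * (2 * n - 2) + b] ! j = map (zz n) [0..<b] ! j"
      by (simp add: zz_periodic_mult)
  qed simp
  then show ?thesis by (metis le_add1 map_append upt_add_eq_append zero_le)
qed


lemma drop_map_zz: "drop r (map (zz n) [0..<L]) = map (zz n) [r..<L]"
  by (simp add: drop_map)

lemma take_map_zz: "take r (map (zz n) [0..<L]) = map (zz n) [0..<min r L]"
  by (simp add: take_map take_upt min_def)

lemma main_trace:
  fixes n L r1 r2 :: nat and u u1 u2 :: "nat list"
  defines "P \<equiv> 2 * n - 2"
  defines "p \<equiv> map (zz n) [0..<L]"
  assumes n: "2 \<le> n" and su: "set u \<subseteq> {1..n}" and L: "length u + P \<le> L"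
    and r1: "r1 \<le> L" "r1 \<le> length u" and r2: "r2 \<le> L" "r2 \<le> length u"
    and t1: "teq u (u1 @ rev (take r1 p))"
    and t2: "teq u (rev (drop (L - r2) p) @ u2)"
    and eq: "teq (u1 @ drop r1 p) (take (L - r2) p @ u2)"
  shows "\<exists>i. i \<le> L \<and> i mod P = r1 mod P \<and> teq u (take i p @ rev (take r1 p))"
proof -
  have P2: "2 \<le> P" using n by (simp add: P_def)
  have lp: "length p = L" by (simp add: p_def)
  have l1: "length u = length u1 + r1" using teq_length[OF t1] r1 lp by simp
  have l2: "length u = r2 + length u2" using teq_length[OF t2] r2 lp by simp
  have l3: "length u1 + (L - r1) = (L - r2) + length u2" using teq_length[OF eq] lp r1 r2 by simp
  have r12: "r1 = r2" using l1 l2 l3 r1 r2 by linarith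
  define r where "r = r1"
  define A where "A = u1"
  define C where "C = drop r p"
  define D where "D = take (L - r) p"
  have C: "C = map (zz n) [r..<L]" by (simp add: C_def p_def drop_map_zz)
  have D: "D = map (zz n) [0..<L - r]" by (simp add: D_def p_def take_map_zz)
  have cC: "chn C" using C chain_zz[OF n] by simp
  have cD: "chn D" using D chain_zz[OF n] by simp
  have lA: "length A = length u - r" using l1 by (simp add: A_def r_def)
  have e: "teq (A @ C) (D @ u2)" using eq r12 by (simp add: A_def C_def D_def r_def)
  from peel1[OF e cC] obtain i A' where
    h: "i \<le> length D" "teq A (take i D @ A')" "teq (A' @ C) (drop i D @ u2)"
       "i = length D \<or> (C \<noteq> [] \<and> D ! i = hd C \<and> (\<forall>c\<in>set A'. \<not> dep (hd C) c))" by blast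
  have lD: "length D = L - r" using D by simp
  have iA: "i + length A' = length A" using teq_length[OF h(2)] h(1) by simp
  have big: "i + P \<le> L - r" using iA lA L r1 by (simp add: r_def)
  then have "i \<noteq> length D" using lD P2 by simp
  then have h4: "C \<noteq> []" "D ! i = hd C" "\<forall>c\<in>set A'. \<not> dep (hd C) c" using h(4) by auto
  define D2 where "D2 = drop i D"
  have D2: "D2 = map (zz n) [i..<L - r]" using D by (simp add: D2_def drop_map)
  have cD2: "chn D2" using D2 chain_zz[OF n] by simp
  have lD2: "length D2 = L - r - i" using D2 by simp
  have hypo: "D2 \<noteq> [] \<longrightarrow> hd D2 = hd C \<and> (\<forall>c\<in>set A'. \<not> dep (hd C) c)"
    using h4 h(1) by (simp add: D2_def hd_drop_conv_nth)
  from peel2[OF h(3)[folded D2_def] cC cD2 _ hypo] obtain C'' where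
    p2: "C = D2 @ C''" "\<forall>c\<in>set A'. \<forall>d\<in>set D2. \<not> dep d c"
    using lD2 C by fastforce
  have A'e: "A' = []"
  proof (rule ccontr)
    assume "A' \<noteq> []"
    then obtain c where c: "c \<in> set A'" by (cases A') auto
    have "set A = set (take i D @ A')" by (rule teq_set[OF h(2)])
    then have "c \<in> set A" using c by simp
    moreover have "set u = set (u1 @ rev (take r1 p))" by (rule teq_set[OF t1])
    ultimately have "c \<in> set u" by (simp add: A_def)
    then have cn: "c \<in> {1..n}" using su by blast
    from zz_cover[OF n cn, of i] obtain t where t: "t < P" "zz n (i + t) = c"
      by (auto simp: P_def)
    have "c \<in> set D2" using t big D2 by (auto simp: image_iff intro!: bexI[of _ "i + t"])
    then show False using p2(2) c dep_refl by blast
  qed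
  have tA: "teq A (take i p)" using h(2) A'e h(1) lD by (simp add: D_def min_def)
  have tu: "teq u (take i p @ rev (take r1 p))"
  proof -
    have "teq (u1 @ rev (take r1 p)) (take i p @ rev (take r1 p))"
      using teq_append[OF tA teq_refl] by (simp add: A_def)
    then show ?thesis using teq_trans[OF t1] by blast
  qed
  have eqt: "zz n (i + t) = zz n (r + t)" if t: "t < L - r - i" for t
  proof -
    have "C ! t = (D2 @ C'') ! t" using p2(1) by simp
    also have "\<dots> = D2 ! t" using t lD2 by (simp add: nth_append)
    also have "\<dots> = zz n (i + t)" using t unfolding D2 by simp
    finally have "C ! t = zz n (i + t)" .
    moreover have "C ! t = zz n (r + t)" using t unfolding C by simp
    ultimately show ?thesis by simp
  qed
  have z0: "zz n i = zz n r" using eqt[of 0] big P2 by simp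
  have z1: "zz n (Suc i) = zz n (Suc r)" using eqt[of 1] big P2 by simp
  have "i mod (2 * n - 2) = r mod (2 * n - 2)" by (rule zz_det[OF n z0 z1])
  then have "i mod P = r1 mod P" unfolding P_def r_def .
  moreover have "i \<le> L" using h(1) lD by simp
  ultimately show ?thesis using tu by blast
qed


abbreviation rng :: "nat \<Rightarrow> nat set" where "rng k \<equiv> {1..<k}"

lemma fb_eq_refl[simp]: "fb_eq k u u"
  by (simp add: fb_eq_def)

lemma fb_eq_sym: "fb_eq k u v \<Longrightarrow> fb_eq k v u"
proof -
  have s: "symp (sup (fb_step k) (fb_step k)\<inverse>\<inverse>)" by (auto simp: symp_def)
  show "fb_eq k u v \<Longrightarrow> fb_eq k v u" unfolding fb_eq_def
    using symp_rtranclp[OF s] by (auto simp: symp_def)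
qed

lemma fb_eq_trans: "fb_eq k u v \<Longrightarrow> fb_eq k v w \<Longrightarrow> fb_eq k u w"
  unfolding fb_eq_def by (rule rtranclp_trans)

lemma fb_step_app: "fb_step k u v \<Longrightarrow> fb_step k (x @ u @ y) (x @ v @ y)"
proof (induction rule: fb_step.induct)
  case (cancel i xs ys)
  then show ?case using fb_step.cancel[of i k "x @ xs" "ys @ y"] by simp
next
  case (comm i j xs ys)
  then show ?case using fb_step.comm[of i k j "x @ xs" "ys @ y"] by simp
qed

lemma fb_eq_app: "fb_eq k u v \<Longrightarrow> fb_eq k (x @ u @ y) (x @ v @ y)"
  unfolding fb_eq_def
proof (induction rule: rtranclp_induct)
  case base then show ?case by simp
next
  case (step b c)
  then have "(sup (fb_step k) (fb_step k)\<inverse>\<inverse>) (x @ b @ y) (x @ c @ y)"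
    using fb_step_app by auto
  then show ?case using step.IH by (meson rtranclp.rtrancl_into_rtrancl)
qed

lemma fb_eq_append: "fb_eq k u u' \<Longrightarrow> fb_eq k v v' \<Longrightarrow> fb_eq k (u @ v) (u' @ v')"
  using fb_eq_app[of k u u' "[]" v] fb_eq_app[of k v v' u' "[]"] fb_eq_trans by fastforce

lemma fb_eq_stepI: "fb_step k u v \<Longrightarrow> fb_eq k u v"
  unfolding fb_eq_def by auto

lemma fb_eq_cancel: "i \<in> rng k \<Longrightarrow> fb_eq k (x @ [i, i] @ y) (x @ y)"
  by (rule fb_eq_stepI) (rule fb_step.cancel)

lemma indep_iff: "(2 \<le> \<bar>int i - int j\<bar>) = (\<not> dep i j)"
  by (auto simp: dep_def)

lemma fb_eq_swap: "i \<in> rng k \<Longrightarrow> j \<in> rng k \<Longrightarrow> \<not> dep i j \<Longrightarrow> fb_eq k (x @ [i, j] @ y) (x @ [j, i] @ y)"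
  by (rule fb_eq_stepI) (rule fb_step.comm, auto simp: indep_iff)

lemma fb_eq_move:
  "set v1 \<subseteq> rng k \<Longrightarrow> a \<in> rng k \<Longrightarrow> \<forall>c\<in>set v1. \<not> dep a c \<Longrightarrow> fb_eq k (v1 @ a # v2) (a # v1 @ v2)"
proof (induction v1 arbitrary: v2 rule: rev_induct)
  case Nil then show ?case by simp
next
  case (snoc c v1)
  have "fb_eq k (v1 @ [c, a] @ v2) (v1 @ [a, c] @ v2)"
    using snoc.prems dep_sym by (intro fb_eq_swap) auto
  moreover have "fb_eq k (v1 @ a # (c # v2)) (a # v1 @ (c # v2))"
    using snoc.IH[of "c # v2"] snoc.prems by auto
  ultimately show ?case using fb_eq_trans by fastforce
qed

lemma teq_fb_eq: "set u \<subseteq> rng k \<Longrightarrow> teq u v \<Longrightarrow> fb_eq k u v"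
proof (induction u arbitrary: v)
  case Nil
  then have "v = []" using teq_length by fastforce
  then show ?case by simp
next
  case (Cons a u)
  from teq_split[OF teq_sym[OF Cons.prems(2)]] obtain v1 v2 where
    s: "v = v1 @ a # v2" "\<forall>c\<in>set v1. \<not> dep a c" "teq (v1 @ v2) u" by blast
  have sv: "set v = set (a # u)" using teq_set[OF Cons.prems(2)] by simp
  have "fb_eq k u (v1 @ v2)" using Cons.IH[of "v1 @ v2"] Cons.prems(1) s(3) teq_sym by auto
  then have "fb_eq k (a # u) (a # v1 @ v2)" using fb_eq_app[of k _ _ "[a]" "[]"] by simp
  moreover have "fb_eq k (v1 @ a # v2) (a # v1 @ v2)"
  proof (rule fb_eq_move)
    show "set v1 \<subseteq> rng k" "a \<in> rng k" using sv Cons.prems(1) s(1) by auto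
  qed (use s in auto)
  ultimately show ?case using s(1) fb_eq_trans fb_eq_sym by metis
qed

lemma fb_eq_rev_cancel: "set w \<subseteq> rng k \<Longrightarrow> fb_eq k (x @ rev w @ w @ y) (x @ y)"
proof (induction w arbitrary: y)
  case Nil then show ?case by simp
next
  case (Cons a w)
  have "fb_eq k ((x @ rev w) @ [a, a] @ (w @ y)) ((x @ rev w) @ (w @ y))"
    using Cons.prems by (intro fb_eq_cancel) auto
  then have "fb_eq k (x @ rev (a # w) @ (a # w) @ y) (x @ rev w @ w @ y)" by simp
  then show ?case using Cons fb_eq_trans by auto
qed

lemma fb_eq_rev_cancel2: "set w \<subseteq> rng k \<Longrightarrow> fb_eq k (x @ w @ rev w @ y) (x @ y)"
  using fb_eq_rev_cancel[of "rev w" k x y] by simp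

lemma red_Nil: "red []"
  unfolding nonred_def using teq_length by fastforce

lemma fb_step_actw: "fb_step k u v \<Longrightarrow> red r \<Longrightarrow> teq (actw u r) (actw v r)"
proof (induction rule: fb_step.induct)
  case (cancel i xs ys)
  have "teq (act i (act i (actw ys r))) (actw ys r)"
    using act_act red_actw[OF cancel.prems] by blast
  then show ?case using actw_teq by simp
next
  case (comm i j xs ys)
  have "\<not> dep i j" using comm.hyps indep_iff by blast
  then have "teq (act i (act j (actw ys r))) (act j (act i (actw ys r)))" by (rule act_comm)
  then show ?case using actw_teq by simp
qed

lemma fb_eq_actw: "fb_eq k u v \<Longrightarrow> teq (actw u []) (actw v [])"
  unfolding fb_eq_def
proof (induction rule: rtranclp_induct)
  case base then show ?case by simp
next
  case (step b c)
  then have "teq (actw b []) (actw c [])"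
    using fb_step_actw[OF _ red_Nil] teq_sym by auto
  then show ?case using step.IH teq_trans by blast
qed

lemma word_problem: "red u \<Longrightarrow> red v \<Longrightarrow> fb_eq k u v \<Longrightarrow> teq u v"
  using fb_eq_actw actw_red_self teq_sym teq_trans by metis

lemma reduce_exists:
  "set w \<subseteq> rng k \<Longrightarrow> \<exists>w'. red w' \<and> set w' \<subseteq> rng k \<and> fb_eq k w w'"
proof (induction "length w" arbitrary: w rule: less_induct)
  case less
  show ?case
  proof (cases "nonred w")
    case False
    then show ?thesis using less.prems by (intro exI[of _ w]) simp
  next
    case True
    then obtain x a y where t: "teq w (x @ a # a # y)" unfolding nonred_def by blast
    have sw: "set w = set (x @ a # a # y)" by (rule teq_set[OF t])
    have "fb_eq k w (x @ [a, a] @ y)" using teq_fb_eq[OF less.prems t] by simp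
    moreover have "fb_eq k (x @ [a, a] @ y) (x @ y)" using sw less.prems by (intro fb_eq_cancel) auto
    ultimately have e: "fb_eq k w (x @ y)" by (rule fb_eq_trans)
    have "length (x @ y) < length w" using teq_length[OF t] by simp
    moreover have "set (x @ y) \<subseteq> rng k" using sw less.prems by auto
    ultimately obtain w' where "red w'" "set w' \<subseteq> rng k" "fb_eq k (x @ y) w'"
      using less.hyps by blast
    then show ?thesis using e fb_eq_trans by blast
  qed
qed

lemma fb_class_eq_iff: "fb_class k u = fb_class k v \<longleftrightarrow> fb_eq k u v"
proof
  assume "fb_class k u = fb_class k v"
  then have "v \<in> fb_class k u" by (simp add: fb_class_def)
  then show "fb_eq k u v" by (simp add: fb_class_def)
next
  assume e: "fb_eq k u v"
  show "fb_class k u = fb_class k v"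
    unfolding fb_class_def using e fb_eq_sym fb_eq_trans by blast
qed

lemma fb_mult_class: "fb_mult k (fb_class k u) (fb_class k v) = fb_class k (u @ v)"
proof (rule Set.set_eqI)
  fix w
  show "w \<in> fb_mult k (fb_class k u) (fb_class k v) \<longleftrightarrow> w \<in> fb_class k (u @ v)"
  proof
    assume "w \<in> fb_mult k (fb_class k u) (fb_class k v)"
    then obtain p q where "fb_eq k u p" "fb_eq k v q" "fb_eq k (p @ q) w"
      unfolding fb_mult_def fb_class_def by blast
    then have "fb_eq k (u @ v) w" using fb_eq_append fb_eq_trans by blast
    then show "w \<in> fb_class k (u @ v)" by (simp add: fb_class_def)
  next
    assume "w \<in> fb_class k (u @ v)"
    then have "fb_eq k (u @ v) w" by (simp add: fb_class_def)
    moreover have "u \<in> fb_class k u" "v \<in> fb_class k v" by (simp_all add: fb_class_def)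
    ultimately show "w \<in> fb_mult k (fb_class k u) (fb_class k v)"
      unfolding fb_mult_def by blast
  qed
qed

lemma FB_carrier: "carrier (FB k) = {fb_class k w | w. set w \<subseteq> rng k}"
  by (simp add: FB_def)

lemma FB_mult[simp]: "x \<otimes>\<^bsub>FB k\<^esub> y = fb_mult k x y"
  by (simp add: FB_def)

lemma FB_one[simp]: "\<one>\<^bsub>FB k\<^esub> = fb_class k []"
  by (simp add: FB_def)

lemma FB_classI: "set w \<subseteq> rng k \<Longrightarrow> fb_class k w \<in> carrier (FB k)"
  by (auto simp: FB_carrier)

lemma group_FB: "group (FB k)"
proof (rule groupI)
  fix x y assume "x \<in> carrier (FB k)" "y \<in> carrier (FB k)"
  then obtain w w' where "x = fb_class k w" "set w \<subseteq> rng k" "y = fb_class k w'" "set w' \<subseteq> rng k"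
    by (auto simp: FB_carrier)
  then show "x \<otimes>\<^bsub>FB k\<^esub> y \<in> carrier (FB k)"
    by (simp add: fb_mult_class FB_classI)
next
  show "\<one>\<^bsub>FB k\<^esub> \<in> carrier (FB k)" by (auto simp: FB_carrier)
next
  fix x y z assume "x \<in> carrier (FB k)" "y \<in> carrier (FB k)" "z \<in> carrier (FB k)"
  then show "x \<otimes>\<^bsub>FB k\<^esub> y \<otimes>\<^bsub>FB k\<^esub> z = x \<otimes>\<^bsub>FB k\<^esub> (y \<otimes>\<^bsub>FB k\<^esub> z)"
    by (auto simp: FB_carrier fb_mult_class)
next
  fix x assume "x \<in> carrier (FB k)"
  then show "\<one>\<^bsub>FB k\<^esub> \<otimes>\<^bsub>FB k\<^esub> x = x"
    by (auto simp: FB_carrier fb_mult_class)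
next
  fix x assume "x \<in> carrier (FB k)"
  then obtain w where w: "x = fb_class k w" "set w \<subseteq> rng k" by (auto simp: FB_carrier)
  have "fb_class k (rev w) \<otimes>\<^bsub>FB k\<^esub> x = \<one>\<^bsub>FB k\<^esub>"
    using w fb_eq_rev_cancel[of w k "[]" "[]"] by (simp add: fb_mult_class fb_class_eq_iff)
  moreover have "fb_class k (rev w) \<in> carrier (FB k)" using w by (intro FB_classI) auto
  ultimately show "\<exists>y\<in>carrier (FB k). y \<otimes>\<^bsub>FB k\<^esub> x = \<one>\<^bsub>FB k\<^esub>" by blast
qed

lemma FB_pow: "fb_class k u [^]\<^bsub>FB k\<^esub> (n::nat) = fb_class k (concat (replicate n u))"
proof (induction n)
  case 0 then show ?case by simp
next
  case (Suc n)
  have "concat (replicate n u) @ u = concat (replicate (Suc n) u)"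
    by (simp add: replicate_append_same[symmetric])
  then show ?case using Suc by (simp add: fb_mult_class)
qed


lemma chain_nth: "chn w \<longleftrightarrow> (\<forall>i. Suc i < length w \<longrightarrow> dep (w ! i) (w ! Suc i) \<and> w ! i \<noteq> w ! Suc i)"
proof (induction w rule: chn.induct)
  case (1 a b w)
  show ?case
  proof
    assume "chn (a # b # w)"
    then show "\<forall>i. Suc i < length (a # b # w) \<longrightarrow> dep ((a # b # w) ! i) ((a # b # w) ! Suc i) \<and> (a # b # w) ! i \<noteq> (a # b # w) ! Suc i"
      using 1 by (auto simp: less_Suc_eq_0_disj nth_Cons split: nat.splits)
  next
    assume h: "\<forall>i. Suc i < length (a # b # w) \<longrightarrow> dep ((a # b # w) ! i) ((a # b # w) ! Suc i) \<and> (a # b # w) ! i \<noteq> (a # b # w) ! Suc i"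
    have "dep a b \<and> a \<noteq> b" using h[rule_format, of 0] by simp
    moreover have "\<forall>i. Suc i < length (b # w) \<longrightarrow> dep ((b # w) ! i) ((b # w) ! Suc i) \<and> (b # w) ! i \<noteq> (b # w) ! Suc i"
    proof (intro allI impI)
      fix i assume "Suc i < length (b # w)"
      then show "dep ((b # w) ! i) ((b # w) ! Suc i) \<and> (b # w) ! i \<noteq> (b # w) ! Suc i"
        using h[rule_format, of "Suc i"] by simp
    qed
    ultimately show "chn (a # b # w)" using 1 by simp
  qed
qed auto

lemma chain_rev: "chn w \<Longrightarrow> chn (rev w)"
proof -
  assume c: "chn w"
  show ?thesis unfolding chain_nth
  proof (intro allI impI)
    fix i assume i: "Suc i < length (rev w)"
    define j where "j = length w - Suc (Suc i)"
    have j: "Suc j < length w" "length w - Suc i = Suc j" using i by (auto simp: j_def)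
    have "rev w ! i = w ! Suc j" "rev w ! Suc i = w ! j" using i j by (auto simp: rev_nth j_def)
    then show "dep (rev w ! i) (rev w ! Suc i) \<and> rev w ! i \<noteq> rev w ! Suc i"
      using c j(1) unfolding chain_nth by (metis dep_sym)
  qed
qed

context
  fixes k :: nat
  assumes k4: "4 \<le> k"
begin

definition nn :: nat where "nn = k - 1"
definition PP :: nat where "PP = 2 * nn - 2"
definition xx :: "nat list set" where "xx = fb_class k (map (zz nn) [0..<PP])"

lemma nn2: "2 \<le> nn" using k4 by (simp add: nn_def)
lemma PP2: "2 \<le> PP" using k4 by (simp add: PP_def nn_def)

lemma zz_rng: "set (map (zz nn) [a..<b]) \<subseteq> rng k"
proof -
  have h: "1 \<le> zz nn j \<and> zz nn j < k" for j using zz_range[OF nn2, of j] k4 unfolding nn_def by auto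
  then show ?thesis by auto
qed

lemma concat_zz: "concat (replicate m (map (zz nn) [0..<PP])) = map (zz nn) [0..<m * PP]"
proof (induction m)
  case 0 then show ?case by simp
next
  case (Suc m)
  have "concat (replicate (Suc m) (map (zz nn) [0..<PP])) = concat (replicate m (map (zz nn) [0..<PP])) @ map (zz nn) [0..<PP]"
    by (simp add: replicate_append_same[symmetric])
  also have "\<dots> = map (zz nn) [0..<m * PP + PP]"
    using Suc map_zz_append[of nn m PP] by (simp add: PP_def)
  finally show ?case by (simp add: add.commute)
qed

lemma xx_pow: "xx [^]\<^bsub>FB k\<^esub> (m::nat) = fb_class k (map (zz nn) [0..<m * PP])"
  unfolding xx_def FB_pow concat_zz ..

lemma xx_carrier: "xx \<in> carrier (FB k)"
  unfolding xx_def using zz_rng by (intro FB_classI)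

lemma xx_inf_order: "1 \<le> m \<Longrightarrow> xx [^]\<^bsub>FB k\<^esub> (m::nat) \<noteq> \<one>\<^bsub>FB k\<^esub>"
proof
  assume m: "1 \<le> m" and e: "xx [^]\<^bsub>FB k\<^esub> m = \<one>\<^bsub>FB k\<^esub>"
  then have "fb_eq k (map (zz nn) [0..<m * PP]) []" by (simp add: xx_pow fb_class_eq_iff)
  then have "teq (map (zz nn) [0..<m * PP]) []"
    using word_problem chain_red[OF chain_zz[OF nn2]] red_Nil by blast
  then have "m * PP = 0" using teq_length by fastforce
  then show False using m PP2 by simp
qed

lemma centralizer_word:
  assumes red: "red u" and su: "set u \<subseteq> rng k" and N: "1 \<le> N"
    and comm: "fb_eq k (u @ map (zz nn) [0..<N * PP]) (map (zz nn) [0..<N * PP] @ u)"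
    and L: "length u + PP \<le> N * PP"
  shows "\<exists>a b. fb_eq k (u @ map (zz nn) [0..<b * PP]) (map (zz nn) [0..<a * PP])"
proof -
  define L where "L = N * PP"
  define p where "p = map (zz nn) [0..<L]"
  have lp: "length p = L" by (simp add: p_def)
  have cp: "chn p" unfolding p_def by (rule chain_zz[OF nn2])
  have sp: "set p \<subseteq> rng k" unfolding p_def by (rule zz_rng)
  have su': "set u \<subseteq> {1..nn}"
  proof
    fix x assume "x \<in> set u"
    then have "x \<in> rng k" using su by blast
    then show "x \<in> {1..nn}" by (auto simp: nn_def)
  qed
  from cancel_chain[OF red cp] obtain r1 u1 where
    c1: "r1 \<le> length p" "r1 \<le> length u" "teq u (u1 @ rev (take r1 p))" "red (u1 @ drop r1 p)" by blast
  have "red (rev u)" using red nonred_rev by simp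
  from cancel_chain[OF this chain_rev[OF cp]] obtain r2 w2 where
    c2: "r2 \<le> length (rev p)" "r2 \<le> length (rev u)" "teq (rev u) (w2 @ rev (take r2 (rev p)))"
        "red (w2 @ drop r2 (rev p))" by blast
  define u2 where "u2 = rev w2"
  have t2: "teq u (rev (drop (L - r2) p) @ u2)"
  proof -
    have "teq (rev (rev u)) (rev (w2 @ rev (take r2 (rev p))))" using teq_rev[OF c2(3)] .
    then show ?thesis by (simp add: u2_def take_rev lp)
  qed
  have rd2: "red (take (L - r2) p @ u2)"
  proof -
    have "rev (w2 @ drop r2 (rev p)) = take (L - r2) p @ u2" by (simp add: u2_def drop_rev lp)
    then show ?thesis using c2(4) nonred_rev by metis
  qed
  have e1: "fb_eq k (u @ p) (u1 @ drop r1 p)"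
  proof -
    have a1: "fb_eq k u (u1 @ rev (take r1 p))" by (rule teq_fb_eq[OF su c1(3)])
    have a2: "fb_eq k (u @ p) ((u1 @ rev (take r1 p)) @ p)" by (rule fb_eq_append[OF a1 fb_eq_refl])
    have a3: "(u1 @ rev (take r1 p)) @ p = u1 @ rev (take r1 p) @ take r1 p @ drop r1 p" by simp
    have st: "set (take r1 p) \<subseteq> rng k" by (rule order_trans[OF set_take_subset sp])
    have a4: "fb_eq k (u1 @ rev (take r1 p) @ take r1 p @ drop r1 p) (u1 @ drop r1 p)"
      by (rule fb_eq_rev_cancel[OF st])
    show ?thesis using fb_eq_trans[OF a2[unfolded a3] a4] .
  qed
  have e2: "fb_eq k (p @ u) (take (L - r2) p @ u2)"
  proof -
    have a1: "fb_eq k u (rev (drop (L - r2) p) @ u2)" by (rule teq_fb_eq[OF su t2])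
    have a2: "fb_eq k (p @ u) (p @ rev (drop (L - r2) p) @ u2)" by (rule fb_eq_append[OF fb_eq_refl a1])
    have a3: "p @ rev (drop (L - r2) p) @ u2 = take (L - r2) p @ drop (L - r2) p @ rev (drop (L - r2) p) @ u2" by simp
    have st: "set (drop (L - r2) p) \<subseteq> rng k" by (rule order_trans[OF set_drop_subset sp])
    have a4: "fb_eq k (take (L - r2) p @ drop (L - r2) p @ rev (drop (L - r2) p) @ u2) (take (L - r2) p @ u2)"
      by (rule fb_eq_rev_cancel2[OF st])
    show ?thesis using fb_eq_trans[OF a2[unfolded a3] a4] .
  qed
  have comm': "fb_eq k (u @ p) (p @ u)" using comm unfolding p_def L_def .
  have "fb_eq k (u1 @ drop r1 p) (take (L - r2) p @ u2)"
    using fb_eq_trans[OF fb_eq_trans[OF fb_eq_sym[OF e1] comm'] e2] .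
  then have eq: "teq (u1 @ drop r1 p) (take (L - r2) p @ u2)"
    using word_problem c1(4) rd2 by blast
  have r2L: "r2 \<le> L" "r2 \<le> length u" using c2 lp by auto
  have LL: "length u + (2 * nn - 2) \<le> L" using L by (simp add: L_def PP_def)
  have r1L: "r1 \<le> L" using c1(1) lp by simp
  have "\<exists>i. i \<le> L \<and> i mod (2 * nn - 2) = r1 mod (2 * nn - 2) \<and>
     teq u (take i (map (zz nn) [0..<L]) @ rev (take r1 (map (zz nn) [0..<L])))"
    by (rule main_trace[OF nn2 su' LL r1L c1(2) r2L c1(3)[unfolded p_def] t2[unfolded p_def] eq[unfolded p_def]])
  then obtain i where i: "i \<le> L" "i mod PP = r1 mod PP" "teq u (take i p @ rev (take r1 p))"
    unfolding PP_def p_def by blast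
  define a where "a = i div PP"
  define b where "b = r1 div PP"
  define rho where "rho = i mod PP"
  have ia: "i = a * PP + rho" by (simp add: a_def rho_def)
  have rb: "r1 = b * PP + rho" using i(2) by (simp add: b_def rho_def)
  have tp: "take j p = map (zz nn) [0..<j]" if "j \<le> L" for j
    using that by (simp add: p_def take_map_zz min_def)
  have ti: "take i p = map (zz nn) [0..<a * PP] @ map (zz nn) [0..<rho]"
  proof -
    have "map (zz nn) [0..<a * PP] @ map (zz nn) [0..<rho] = map (zz nn) [0..<a * PP + rho]"
      unfolding PP_def by (rule map_zz_append)
    then show ?thesis using tp[OF i(1)] ia by simp
  qed
  have tr: "take r1 p = map (zz nn) [0..<b * PP] @ map (zz nn) [0..<rho]"
  proof -
    have "map (zz nn) [0..<b * PP] @ map (zz nn) [0..<rho] = map (zz nn) [0..<b * PP + rho]"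
      unfolding PP_def by (rule map_zz_append)
    then show ?thesis using tp[OF r1L] rb by simp
  qed
  define ma where "ma = map (zz nn) [0..<a * PP]"
  define mb where "mb = map (zz nn) [0..<b * PP]"
  define mr where "mr = map (zz nn) [0..<rho]"
  have smb: "set mb \<subseteq> rng k" "set mr \<subseteq> rng k" unfolding mb_def mr_def by (rule zz_rng)+
  have "fb_eq k u (take i p @ rev (take r1 p))" by (rule teq_fb_eq[OF su i(3)])
  moreover have "take i p @ rev (take r1 p) = ma @ mr @ rev mr @ rev mb"
    unfolding ti tr ma_def mb_def mr_def by simp
  ultimately have "fb_eq k u (ma @ mr @ rev mr @ rev mb)" by simp
  then have f1: "fb_eq k (u @ mb) ((ma @ mr @ rev mr @ rev mb) @ mb)" by (rule fb_eq_append[OF _ fb_eq_refl])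
  have f2: "fb_eq k ((ma @ mr @ rev mr) @ rev mb @ mb @ []) ((ma @ mr @ rev mr) @ [])"
    by (rule fb_eq_rev_cancel[OF smb(1)])
  have f3: "fb_eq k (ma @ mr @ rev mr @ []) (ma @ [])"
    by (rule fb_eq_rev_cancel2[OF smb(2)])
  have f2': "fb_eq k ((ma @ mr @ rev mr @ rev mb) @ mb) (ma @ mr @ rev mr)" using f2 by simp
  have f3': "fb_eq k (ma @ mr @ rev mr) ma" using f3 by simp
  have "fb_eq k (u @ mb) ma" by (rule fb_eq_trans[OF fb_eq_trans[OF f1 f2'] f3'])
  then show ?thesis unfolding ma_def mb_def by blast
qed

end


lemma foldr_perm: "foldr (\<lambda>i p. transpose i (Suc i) \<circ> p) u q = perm_of_word u \<circ> q"
proof (induction u)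
  case Nil
  show ?case by (simp add: perm_of_word_def)
next
  case (Cons a u)
  have "foldr (\<lambda>i p. transpose i (Suc i) \<circ> p) (a # u) q = transpose a (Suc a) \<circ> foldr (\<lambda>i p. transpose i (Suc i) \<circ> p) u q"
    by simp
  also have "\<dots> = transpose a (Suc a) \<circ> (perm_of_word u \<circ> q)" by (simp only: Cons.IH)
  also have "\<dots> = (transpose a (Suc a) \<circ> perm_of_word u) \<circ> q" by (simp add: comp_assoc)
  also have "transpose a (Suc a) \<circ> perm_of_word u = perm_of_word (a # u)" by (simp add: perm_of_word_def)
  finally show ?case .
qed

lemma perm_app: "perm_of_word (u @ v) = perm_of_word u \<circ> perm_of_word v"
proof -
  have "perm_of_word (u @ v) = foldr (\<lambda>i p. transpose i (Suc i) \<circ> p) u (perm_of_word v)"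
    unfolding perm_of_word_def by (simp only: foldr_append comp_apply)
  then show ?thesis by (simp only: foldr_perm)
qed

lemma perm_Nil[simp]: "perm_of_word [] = id"
  by (simp add: perm_of_word_def)

lemma perm_Cons: "perm_of_word (a # u) = transpose a (Suc a) \<circ> perm_of_word u"
  by (simp add: perm_of_word_def)

lemma transpose_disj_comm:
  assumes "\<not> dep i j"
  shows "transpose i (Suc i) \<circ> transpose j (Suc j) = transpose j (Suc j) \<circ> transpose i (Suc i)"
proof (rule ext)
  fix x
  show "(transpose i (Suc i) \<circ> transpose j (Suc j)) x = (transpose j (Suc j) \<circ> transpose i (Suc i)) x"
    using assms by (simp add: transpose_def dep_def) arith
qed

lemma fb_step_perm: "fb_step k u v \<Longrightarrow> perm_of_word u = perm_of_word v"
proof (induction rule: fb_step.induct)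
  case (cancel i xs ys)
  then show ?case by (simp add: perm_app perm_Cons comp_assoc)
next
  case (comm i j xs ys)
  then have "\<not> dep i j" using indep_iff by blast
  then have e: "transpose i (Suc i) \<circ> transpose j (Suc j) = transpose j (Suc j) \<circ> transpose i (Suc i)"
    by (rule transpose_disj_comm)
  have "perm_of_word [i, j] = perm_of_word [j, i]"
    by (simp only: perm_Cons perm_Nil comp_id e)
  then show ?case by (simp only: perm_app)
qed

lemma fb_eq_perm: "fb_eq k u v \<Longrightarrow> perm_of_word u = perm_of_word v"
  unfolding fb_eq_def
proof (induction rule: rtranclp_induct)
  case (step b c)
  then show ?case using fb_step_perm by fastforce
qed simp

lemma class_perm: "(\<forall>w\<in>fb_class k u. perm_of_word w = id) \<longleftrightarrow> perm_of_word u = id"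
  using fb_eq_perm by (auto simp: fb_class_def)

lemma PFB_carrier: "carrier (PFB k) = {C \<in> carrier (FB k). \<forall>w\<in>C. perm_of_word w = id}"
  by (simp add: PFB_def)

lemma PFB_classI: "set u \<subseteq> rng k \<Longrightarrow> perm_of_word u = id \<Longrightarrow> fb_class k u \<in> carrier (PFB k)"
  using FB_classI class_perm by (auto simp: PFB_carrier)

lemma FB_inv: "set u \<subseteq> rng k \<Longrightarrow> inv\<^bsub>FB k\<^esub> (fb_class k u) = fb_class k (rev u)"
proof -
  assume su: "set u \<subseteq> rng k"
  have "fb_class k (rev u) \<otimes>\<^bsub>FB k\<^esub> fb_class k u = \<one>\<^bsub>FB k\<^esub>"
    using fb_eq_rev_cancel[OF su, of "[]" "[]"] by (simp add: fb_mult_class fb_class_eq_iff)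
  then show ?thesis
    using group.inv_equality[OF group_FB] FB_classI su by (metis set_rev)
qed

lemma subgroup_PFB: "subgroup (carrier (PFB k)) (FB k)"
proof (rule group.subgroupI[OF group_FB])
  show "carrier (PFB k) \<subseteq> carrier (FB k)" by (auto simp: PFB_carrier)
  show "carrier (PFB k) \<noteq> {}" using PFB_classI[of "[]" k] by auto
next
  fix a assume "a \<in> carrier (PFB k)"
  then obtain u where u: "a = fb_class k u" "set u \<subseteq> rng k" "perm_of_word u = id"
    by (auto simp: PFB_carrier FB_carrier class_perm)
  have "perm_of_word (rev u @ u) = perm_of_word []"
    using fb_eq_perm fb_eq_rev_cancel[OF u(2), of "[]" "[]"] by simp
  then have "perm_of_word (rev u) = id" using u(3) by (simp add: perm_app)
  then show "inv\<^bsub>FB k\<^esub> a \<in> carrier (PFB k)" using u FB_inv PFB_classI by auto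
next
  fix a b assume "a \<in> carrier (PFB k)" "b \<in> carrier (PFB k)"
  then obtain u v where "a = fb_class k u" "set u \<subseteq> rng k" "perm_of_word u = id"
    "b = fb_class k v" "set v \<subseteq> rng k" "perm_of_word v = id"
    by (auto simp: PFB_carrier FB_carrier class_perm)
  then show "a \<otimes>\<^bsub>FB k\<^esub> b \<in> carrier (PFB k)"
    by (simp add: fb_mult_class perm_app PFB_classI)
qed

lemma group_PFB: "group (PFB k)"
proof -
  have "group ((FB k)\<lparr>carrier := carrier (PFB k)\<rparr>)"
    by (rule subgroup.subgroup_is_group[OF subgroup_PFB group_FB])
  then show ?thesis by (simp add: PFB_def)
qed

lemma perm_permutes: "set u \<subseteq> rng k \<Longrightarrow> perm_of_word u permutes {1..k}"
proof (induction u)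
  case Nil show ?case unfolding perm_Nil by (rule permutes_id)
next
  case (Cons a u)
  have "transpose a (Suc a) permutes {1..k}" using Cons.prems by (intro permutes_swap_id) auto
  moreover have "perm_of_word u permutes {1..k}" using Cons by simp
  ultimately show ?case unfolding perm_Cons by (rule permutes_compose[rotated])
qed

lemma perm_concat_rep: "perm_of_word (concat (replicate m w)) = perm_of_word w ^^ m"
  by (induction m) (simp_all add: perm_app)

lemma perm_finite_order:
  assumes "s permutes {1..(k::nat)}"
  shows "\<exists>m\<ge>1. s ^^ m = id"
proof -
  have pj: "s ^^ j permutes {1..k}" for j
  proof (induction j)
    case 0 then show ?case by (simp only: funpow.simps(1) permutes_id)
  next
    case (Suc j) then show ?case by (simp only: funpow.simps(2) permutes_compose[OF Suc assms])
  qed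
  have "(\<lambda>j. s ^^ j) ` UNIV \<subseteq> {p. p permutes {1..k}}" using pj by auto
  then have fin: "finite ((\<lambda>j. s ^^ j) ` UNIV)"
    using finite_permutations[of "{1..k}"] finite_subset by auto
  have "\<not> inj (\<lambda>j::nat. s ^^ j)"
  proof
    assume "inj (\<lambda>j::nat. s ^^ j)"
    then have "finite (UNIV :: nat set)" using fin finite_imageD by blast
    then show False by simp
  qed
  then obtain a b :: nat where ab: "a \<noteq> b" "s ^^ a = s ^^ b" unfolding inj_def by blast
  define lo where "lo = min a b"
  define hi where "hi = max a b"
  have lh: "lo < hi" "s ^^ lo = s ^^ hi" using ab by (auto simp: lo_def hi_def min_def max_def)
  have e: "s ^^ hi = s ^^ (hi - lo) \<circ> s ^^ lo"
  proof -
    have "hi - lo + lo = hi" using lh(1) by simp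
    then show ?thesis by (metis funpow_add)
  qed
  have bij: "bij (s ^^ lo)" using pj permutes_bij by blast
  have "s ^^ (hi - lo) = id"
  proof (rule ext)
    fix y
    obtain z where z: "y = (s ^^ lo) z" using bij by (meson bij_pointE)
    have "(s ^^ (hi - lo)) y = (s ^^ hi) z" using e z by simp
    also have "\<dots> = y" using lh z by simp
    finally show "(s ^^ (hi - lo)) y = id y" by simp
  qed
  then show ?thesis using lh by (intro exI[of _ "hi - lo"]) auto
qed


declare FB_mult[simp del] FB_one[simp del]

lemma PFB_mult: "a \<otimes>\<^bsub>PFB k\<^esub> b = a \<otimes>\<^bsub>FB k\<^esub> b"
  by (simp add: PFB_def)

lemma PFB_one: "\<one>\<^bsub>PFB k\<^esub> = \<one>\<^bsub>FB k\<^esub>"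
  by (simp add: PFB_def)

lemma pow_upd: "x [^]\<^bsub>G\<lparr>carrier := S\<rparr>\<^esub> (n::nat) = x [^]\<^bsub>G\<^esub> n"
  by (simp add: nat_pow_def)

context
  fixes k :: nat
  assumes k4: "4 \<le> k"
begin

lemma centralizer_FB:
  assumes h: "h \<in> carrier (FB k)" and N: "1 \<le> (N::nat)"
    and c: "h \<otimes>\<^bsub>FB k\<^esub> xx k [^]\<^bsub>FB k\<^esub> N = xx k [^]\<^bsub>FB k\<^esub> N \<otimes>\<^bsub>FB k\<^esub> h"
  shows "\<exists>a b. h \<otimes>\<^bsub>FB k\<^esub> xx k [^]\<^bsub>FB k\<^esub> (b::nat) = xx k [^]\<^bsub>FB k\<^esub> (a::nat)"
proof -
  interpret G: group "FB k" by (rule group_FB)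
  obtain u0 where u0: "h = fb_class k u0" "set u0 \<subseteq> rng k" using h by (auto simp: FB_carrier)
  obtain u where u: "red u" "set u \<subseteq> rng k" "fb_eq k u0 u" using reduce_exists[OF u0(2)] by blast
  have hu: "h = fb_class k u" using u0(1) u(3) fb_class_eq_iff by blast
  define s where "s = length u + 1"
  have xc: "xx k \<in> carrier (FB k)" by (rule xx_carrier[OF k4])
  have xN: "xx k [^]\<^bsub>FB k\<^esub> N \<in> carrier (FB k)" by (rule G.nat_pow_closed[OF xc])
  have "(xx k [^]\<^bsub>FB k\<^esub> N) [^]\<^bsub>FB k\<^esub> s \<otimes>\<^bsub>FB k\<^esub> h = h \<otimes>\<^bsub>FB k\<^esub> (xx k [^]\<^bsub>FB k\<^esub> N) [^]\<^bsub>FB k\<^esub> s"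
    by (rule G.group_commutes_pow[OF c[symmetric] xN h])
  then have cm: "h \<otimes>\<^bsub>FB k\<^esub> xx k [^]\<^bsub>FB k\<^esub> (N * s) = xx k [^]\<^bsub>FB k\<^esub> (N * s) \<otimes>\<^bsub>FB k\<^esub> h"
    using G.nat_pow_pow[OF xc] by simp
  have "fb_class k (u @ map (zz (nn k)) [0..<N * s * PP k]) = fb_class k (map (zz (nn k)) [0..<N * s * PP k] @ u)"
    using cm unfolding hu xx_pow[OF k4] FB_mult fb_mult_class .
  then have fe: "fb_eq k (u @ map (zz (nn k)) [0..<N * s * PP k]) (map (zz (nn k)) [0..<N * s * PP k] @ u)"
    by (simp add: fb_class_eq_iff)
  have Ns: "1 \<le> N * s" using N by (simp add: s_def)
  have P1: "1 \<le> PP k" using PP2[OF k4] by simp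
  have "length u + PP k \<le> length u * PP k + PP k" using P1 by simp
  also have "\<dots> = s * PP k" by (simp add: s_def algebra_simps)
  also have "\<dots> \<le> N * s * PP k" using N by simp
  finally have L: "length u + PP k \<le> N * s * PP k" .
  from centralizer_word[OF k4 u(1) u(2) Ns fe L] obtain a b where
    "fb_eq k (u @ map (zz (nn k)) [0..<b * PP k]) (map (zz (nn k)) [0..<a * PP k])" by blast
  then have "h \<otimes>\<^bsub>FB k\<^esub> xx k [^]\<^bsub>FB k\<^esub> b = xx k [^]\<^bsub>FB k\<^esub> a"
    unfolding hu xx_pow[OF k4] FB_mult fb_mult_class fb_class_eq_iff .
  then show ?thesis by blast
qed

lemma KP_FB:
  assumes m: "1 \<le> (m::nat)" and h: "h \<in> carrier (FB k)" and t: "1 \<le> (t::nat)"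
    and c: "h \<otimes>\<^bsub>FB k\<^esub> (xx k [^]\<^bsub>FB k\<^esub> m) [^]\<^bsub>FB k\<^esub> (t::nat) = (xx k [^]\<^bsub>FB k\<^esub> m) [^]\<^bsub>FB k\<^esub> t \<otimes>\<^bsub>FB k\<^esub> h"
  shows "h = \<one>\<^bsub>FB k\<^esub> \<or> (\<exists>c::nat\<ge>1. h [^]\<^bsub>FB k\<^esub> m = (xx k [^]\<^bsub>FB k\<^esub> m) [^]\<^bsub>FB k\<^esub> c \<or>
           h [^]\<^bsub>FB k\<^esub> m \<otimes>\<^bsub>FB k\<^esub> (xx k [^]\<^bsub>FB k\<^esub> m) [^]\<^bsub>FB k\<^esub> c = \<one>\<^bsub>FB k\<^esub>)"
proof -
  interpret G: group "FB k" by (rule group_FB)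
  have xc: "xx k \<in> carrier (FB k)" by (rule xx_carrier[OF k4])
  have c': "h \<otimes>\<^bsub>FB k\<^esub> xx k [^]\<^bsub>FB k\<^esub> (m * t) = xx k [^]\<^bsub>FB k\<^esub> (m * t) \<otimes>\<^bsub>FB k\<^esub> h"
    using c G.nat_pow_pow[OF xc] by simp
  have mt: "1 \<le> m * t" using m t by simp
  from centralizer_FB[OF h mt c'] obtain a b :: nat where
    ab: "h \<otimes>\<^bsub>FB k\<^esub> xx k [^]\<^bsub>FB k\<^esub> b = xx k [^]\<^bsub>FB k\<^esub> a" by blast
  have pc: "(xx k [^]\<^bsub>FB k\<^esub> m) [^]\<^bsub>FB k\<^esub> c = (xx k [^]\<^bsub>FB k\<^esub> c) [^]\<^bsub>FB k\<^esub> m" for c :: nat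
    using G.nat_pow_pow[OF xc] by (simp add: mult.commute)
  show ?thesis
  proof (cases "b \<le> a")
    case True
    have "xx k [^]\<^bsub>FB k\<^esub> (a - b) \<otimes>\<^bsub>FB k\<^esub> xx k [^]\<^bsub>FB k\<^esub> b = xx k [^]\<^bsub>FB k\<^esub> a"
      using G.nat_pow_mult[OF xc, of "a - b" b] True by simp
    then have "h = xx k [^]\<^bsub>FB k\<^esub> (a - b)" using ab h xc by (metis G.nat_pow_closed G.right_cancel)
    then show ?thesis
    proof (cases "a - b = 0")
      case True
      then show ?thesis using \<open>h = _\<close> by simp
    next
      case False
      then have "h [^]\<^bsub>FB k\<^esub> m = (xx k [^]\<^bsub>FB k\<^esub> m) [^]\<^bsub>FB k\<^esub> (a - b)" using \<open>h = _\<close> pc by simp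
      then show ?thesis using False by (intro disjI2 exI[of _ "a - b"]) auto
    qed
  next
    case False
    define c where "c = b - a"
    have c1: "1 \<le> c" using False by (simp add: c_def)
    have "xx k [^]\<^bsub>FB k\<^esub> c \<otimes>\<^bsub>FB k\<^esub> xx k [^]\<^bsub>FB k\<^esub> a = xx k [^]\<^bsub>FB k\<^esub> b"
      using G.nat_pow_mult[OF xc, of c a] False by (simp add: c_def)
    then have "(h \<otimes>\<^bsub>FB k\<^esub> xx k [^]\<^bsub>FB k\<^esub> c) \<otimes>\<^bsub>FB k\<^esub> xx k [^]\<^bsub>FB k\<^esub> a = xx k [^]\<^bsub>FB k\<^esub> a"
      using ab G.m_assoc[OF h G.nat_pow_closed[OF xc] G.nat_pow_closed[OF xc], of c a] by simp
    then have hc: "h \<otimes>\<^bsub>FB k\<^esub> xx k [^]\<^bsub>FB k\<^esub> c = \<one>\<^bsub>FB k\<^esub>"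
      using G.r_cancel_one[OF G.nat_pow_closed[OF xc] G.m_closed[OF h G.nat_pow_closed[OF xc]]] by blast
    then have ch: "xx k [^]\<^bsub>FB k\<^esub> c \<otimes>\<^bsub>FB k\<^esub> h = \<one>\<^bsub>FB k\<^esub>"
      using h xc by (simp add: G.inv_comm)
    have "(h \<otimes>\<^bsub>FB k\<^esub> xx k [^]\<^bsub>FB k\<^esub> c) [^]\<^bsub>FB k\<^esub> m = h [^]\<^bsub>FB k\<^esub> m \<otimes>\<^bsub>FB k\<^esub> (xx k [^]\<^bsub>FB k\<^esub> c) [^]\<^bsub>FB k\<^esub> m"
      using hc ch h xc by (intro G.pow_mult_distrib) simp_all
    then have "h [^]\<^bsub>FB k\<^esub> m \<otimes>\<^bsub>FB k\<^esub> (xx k [^]\<^bsub>FB k\<^esub> m) [^]\<^bsub>FB k\<^esub> c = \<one>\<^bsub>FB k\<^esub>"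
      using hc pc by simp
    then show ?thesis using c1 by blast
  qed
qed

lemma power_in_H:
  assumes H: "subgroup H (PFB k)" and fin: "finite (rcosets\<^bsub>PFB k\<^esub> H)"
  shows "\<exists>m::nat\<ge>1. xx k [^]\<^bsub>FB k\<^esub> m \<in> H"
proof -
  interpret G: group "FB k" by (rule group_FB)
  define w where "w = map (zz (nn k)) [0..<PP k]"
  have sw: "set w \<subseteq> rng k" unfolding w_def by (rule zz_rng[OF k4])
  have "perm_of_word w permutes {1..k}" by (rule perm_permutes[OF sw])
  from perm_finite_order[OF this] obtain m0 where m0: "1 \<le> m0" "perm_of_word w ^^ m0 = id" by blast
  have xc: "xx k \<in> carrier (FB k)" by (rule xx_carrier[OF k4])
  define y where "y j = xx k [^]\<^bsub>FB k\<^esub> (m0 * j)" for j :: nat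
  have yP: "y j \<in> carrier (PFB k)" for j
  proof -
    have "y j = fb_class k (concat (replicate (m0 * j) w))"
      by (simp add: y_def xx_pow[OF k4] w_def concat_zz[OF k4])
    moreover have "set (concat (replicate (m0 * j) w)) \<subseteq> rng k" using sw by auto
    moreover have "perm_of_word (concat (replicate (m0 * j) w)) = id"
      unfolding perm_concat_rep funpow_mult[symmetric] m0(2) by simp
    ultimately show ?thesis using PFB_classI by simp
  qed
  define f where "f j = H #>\<^bsub>PFB k\<^esub> y j" for j
  have "f j \<in> rcosets\<^bsub>PFB k\<^esub> H" for j unfolding f_def RCOSETS_def using yP[of j] by blast
  then have "f ` UNIV \<subseteq> rcosets\<^bsub>PFB k\<^esub> H" by blast
  then have finf: "finite (f ` UNIV)" using fin finite_subset by blast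
  have "\<not> inj f"
  proof
    assume "inj f"
    then have "finite (UNIV :: nat set)" using finf finite_imageD by blast
    then show False by simp
  qed
  then obtain a b :: nat where ab: "a \<noteq> b" "f a = f b" unfolding inj_def by blast
  define lo where "lo = min a b"
  define hi where "hi = max a b"
  have lh: "lo < hi" "f lo = f hi" using ab by (auto simp: lo_def hi_def min_def max_def)
  have one_H: "\<one>\<^bsub>PFB k\<^esub> \<in> H" by (rule subgroup.one_closed[OF H])
  have Hsub: "H \<subseteq> carrier (FB k)" using subgroup.subset[OF H] by (auto simp: PFB_carrier)
  have yc: "y j \<in> carrier (FB k)" for j unfolding y_def by (rule G.nat_pow_closed[OF xc])
  have "y hi = \<one>\<^bsub>FB k\<^esub> \<otimes>\<^bsub>FB k\<^esub> y hi" using yc[of hi] by simp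
  then have "y hi \<in> f hi"
    using one_H unfolding f_def r_coset_def PFB_mult PFB_one by blast
  then have "y hi \<in> f lo" using lh by simp
  then obtain h where h: "h \<in> H" "y hi = h \<otimes>\<^bsub>FB k\<^esub> y lo"
    unfolding f_def r_coset_def PFB_mult by blast
  have "xx k [^]\<^bsub>FB k\<^esub> (m0 * (hi - lo)) \<otimes>\<^bsub>FB k\<^esub> y lo = y hi"
  proof -
    have "m0 * (hi - lo) + m0 * lo = m0 * hi" using lh(1) by (simp add: algebra_simps)
    then show ?thesis using G.nat_pow_mult[OF xc, of "m0 * (hi - lo)" "m0 * lo"] by (simp add: y_def)
  qed
  then have "h \<otimes>\<^bsub>FB k\<^esub> y lo = xx k [^]\<^bsub>FB k\<^esub> (m0 * (hi - lo)) \<otimes>\<^bsub>FB k\<^esub> y lo"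
    using h(2) by simp
  moreover have "h \<in> carrier (FB k)" using h(1) Hsub by blast
  ultimately have "h = xx k [^]\<^bsub>FB k\<^esub> (m0 * (hi - lo))"
    using G.right_cancel[OF yc[of lo] _ G.nat_pow_closed[OF xc]] by blast
  moreover have "1 \<le> m0 * (hi - lo)" using m0(1) lh(1) by simp
  ultimately show ?thesis using h(1) by blast
qed

end


lemma DirProd_pow: "(a, b) [^]\<^bsub>A \<times>\<times> B\<^esub> (n::nat) = (a [^]\<^bsub>A\<^esub> n, b [^]\<^bsub>B\<^esub> n)"
  by (induction n) simp_all

lemma core:
  fixes G :: "'g monoid" and A :: "'a monoid" and B :: "'b monoid"
  assumes gG: "group G" and gA: "group A" and gB: "group B"
    and phi: "\<phi> \<in> iso G (A \<times>\<times> B)" and x: "x \<in> carrier G"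
    and infA: "infinite (carrier A)"
    and binf: "\<forall>s::nat\<ge>1. snd (\<phi> x) [^]\<^bsub>B\<^esub> s \<noteq> \<one>\<^bsub>B\<^esub>"
    and KP: "\<forall>h\<in>carrier G. \<forall>t::nat\<ge>1. h \<otimes>\<^bsub>G\<^esub> x [^]\<^bsub>G\<^esub> t = x [^]\<^bsub>G\<^esub> t \<otimes>\<^bsub>G\<^esub> h \<longrightarrow>
       h = \<one>\<^bsub>G\<^esub> \<or> (\<exists>c::nat\<ge>1. h [^]\<^bsub>G\<^esub> (m::nat) = x [^]\<^bsub>G\<^esub> c \<or> h [^]\<^bsub>G\<^esub> m \<otimes>\<^bsub>G\<^esub> x [^]\<^bsub>G\<^esub> c = \<one>\<^bsub>G\<^esub>)"
  shows False
proof -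
  interpret G: group G by (rule gG)
  interpret A: group A by (rule gA)
  interpret B: group B by (rule gB)
  have gAB: "group (A \<times>\<times> B)" by (rule DirProd_group[OF gA gB])
  interpret AB: group "A \<times>\<times> B" by (rule gAB)
  have hom: "\<phi> \<in> hom G (A \<times>\<times> B)" using phi by (simp add: iso_def)
  have bij: "bij_betw \<phi> (carrier G) (carrier (A \<times>\<times> B))" using phi by (simp add: iso_def)
  interpret GH: group_hom G "A \<times>\<times> B" \<phi>
    by (rule group_hom.intro[OF gG gAB]) (simp add: group_hom_axioms_def hom)
  obtain ga gb where g: "\<phi> x = (ga, gb)" "ga \<in> carrier A" "gb \<in> carrier B"
    using GH.hom_closed[OF x] by (cases "\<phi> x") auto
  have binf': "gb [^]\<^bsub>B\<^esub> s \<noteq> \<one>\<^bsub>B\<^esub>" if "1 \<le> s" for s :: nat using binf that g by auto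
  obtain e t where et: "e \<in> carrier A" "e \<noteq> \<one>\<^bsub>A\<^esub>" "1 \<le> (t::nat)"
    "e \<otimes>\<^bsub>A\<^esub> ga [^]\<^bsub>A\<^esub> t = ga [^]\<^bsub>A\<^esub> t \<otimes>\<^bsub>A\<^esub> e"
  proof (cases "\<exists>s::nat\<ge>1. ga [^]\<^bsub>A\<^esub> s = \<one>\<^bsub>A\<^esub>")
    case True
    then obtain s :: nat where s: "1 \<le> s" "ga [^]\<^bsub>A\<^esub> s = \<one>\<^bsub>A\<^esub>" by blast
    have "carrier A \<noteq> {\<one>\<^bsub>A\<^esub>}" using infA by auto
    then obtain e where e: "e \<in> carrier A" "e \<noteq> \<one>\<^bsub>A\<^esub>" using A.one_closed by blast
    show ?thesis using that[OF e s(1)] s(2) e by simp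
  next
    case False
    then have "ga [^]\<^bsub>A\<^esub> (1::nat) \<noteq> \<one>\<^bsub>A\<^esub>" by blast
    then have "ga \<noteq> \<one>\<^bsub>A\<^esub>" by auto
    then show ?thesis using that[of ga 1] g(2) by simp
  qed
  have eB: "(e, \<one>\<^bsub>B\<^esub>) \<in> carrier (A \<times>\<times> B)" using et(1) by simp
  have img: "\<phi> ` carrier G = carrier (A \<times>\<times> B)" using bij by (simp add: bij_betw_def)
  define h where "h = inv_into (carrier G) \<phi> (e, \<one>\<^bsub>B\<^esub>)"
  have hc: "h \<in> carrier G" unfolding h_def using eB img by (metis inv_into_into)
  have ph: "\<phi> h = (e, \<one>\<^bsub>B\<^esub>)" unfolding h_def using eB img by (metis f_inv_into_f)
  have inj: "inj_on \<phi> (carrier G)" using bij by (simp add: bij_betw_def)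
  have pxt: "\<phi> (x [^]\<^bsub>G\<^esub> n) = (ga [^]\<^bsub>A\<^esub> n, gb [^]\<^bsub>B\<^esub> n)" for n :: nat
    using GH.hom_nat_pow[OF x] g(1) DirProd_pow by metis
  have php: "\<phi> (h [^]\<^bsub>G\<^esub> n) = (e [^]\<^bsub>A\<^esub> n, \<one>\<^bsub>B\<^esub>)" for n :: nat
    using GH.hom_nat_pow[OF hc] ph DirProd_pow B.nat_pow_one by metis
  have "\<phi> (h \<otimes>\<^bsub>G\<^esub> x [^]\<^bsub>G\<^esub> t) = \<phi> (x [^]\<^bsub>G\<^esub> t \<otimes>\<^bsub>G\<^esub> h)"
    using et g hc x ph pxt by (simp add: GH.hom_mult)
  then have comm: "h \<otimes>\<^bsub>G\<^esub> x [^]\<^bsub>G\<^esub> t = x [^]\<^bsub>G\<^esub> t \<otimes>\<^bsub>G\<^esub> h"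
    using inj hc x by (meson G.m_closed G.nat_pow_closed inj_onD)
  from KP hc et(3) comm have
    "h = \<one>\<^bsub>G\<^esub> \<or> (\<exists>c::nat\<ge>1. h [^]\<^bsub>G\<^esub> m = x [^]\<^bsub>G\<^esub> c \<or> h [^]\<^bsub>G\<^esub> m \<otimes>\<^bsub>G\<^esub> x [^]\<^bsub>G\<^esub> c = \<one>\<^bsub>G\<^esub>)"
    by blast
  then show False
  proof (elim disjE exE conjE)
    assume "h = \<one>\<^bsub>G\<^esub>"
    then have "\<phi> h = (\<one>\<^bsub>A\<^esub>, \<one>\<^bsub>B\<^esub>)" by simp
    then show False using ph et(2) by simp
  next
    fix c :: nat assume c: "1 \<le> c" "h [^]\<^bsub>G\<^esub> m = x [^]\<^bsub>G\<^esub> c"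
    then have "\<phi> (h [^]\<^bsub>G\<^esub> m) = \<phi> (x [^]\<^bsub>G\<^esub> c)" by simp
    then have "gb [^]\<^bsub>B\<^esub> c = \<one>\<^bsub>B\<^esub>" using php pxt by simp
    then show False using binf' c(1) by blast
  next
    fix c :: nat assume c: "1 \<le> c" "h [^]\<^bsub>G\<^esub> m \<otimes>\<^bsub>G\<^esub> x [^]\<^bsub>G\<^esub> c = \<one>\<^bsub>G\<^esub>"
    then have "\<phi> (h [^]\<^bsub>G\<^esub> m \<otimes>\<^bsub>G\<^esub> x [^]\<^bsub>G\<^esub> c) = (\<one>\<^bsub>A\<^esub>, \<one>\<^bsub>B\<^esub>)" by simp
    then have "\<one>\<^bsub>B\<^esub> \<otimes>\<^bsub>B\<^esub> gb [^]\<^bsub>B\<^esub> c = \<one>\<^bsub>B\<^esub>"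
      using php pxt hc x by (simp add: GH.hom_mult)
    then have "gb [^]\<^bsub>B\<^esub> c = \<one>\<^bsub>B\<^esub>" using g(3) by simp
    then show False using binf' c(1) by blast
  qed
qed

theorem corollary2p17:
  fixes k :: nat and H :: "nat list set set"
    and A :: "'a monoid" and B :: "'b monoid"
  assumes "k \<ge> 4"
    and "subgroup H (PFB k)"
    and "finite (rcosets\<^bsub>PFB k\<^esub> H)"
    and "group A" and "group B"
    and "infinite (carrier A)" and "infinite (carrier B)"
  shows "\<not> ((PFB k)\<lparr>carrier := H\<rparr> \<cong> A \<times>\<times> B)"
proof
  assume "(PFB k)\<lparr>carrier := H\<rparr> \<cong> A \<times>\<times> B"
  then obtain \<phi> where phi: "\<phi> \<in> iso ((PFB k)\<lparr>carrier := H\<rparr>) (A \<times>\<times> B)" by (auto simp: is_iso_def)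
  have k4: "4 \<le> k" using assms(1) by simp
  define G where "G = (PFB k)\<lparr>carrier := H\<rparr>"
  interpret FB: group "FB k" by (rule group_FB)
  have gG: "group G" unfolding G_def by (rule subgroup.subgroup_is_group[OF assms(2) group_PFB])
  have cG: "carrier G = H" by (simp add: G_def)
  have mG: "a \<otimes>\<^bsub>G\<^esub> b = a \<otimes>\<^bsub>FB k\<^esub> b" for a b by (simp add: G_def PFB_def)
  have oG: "\<one>\<^bsub>G\<^esub> = \<one>\<^bsub>FB k\<^esub>" by (simp add: G_def PFB_def)
  have pG: "a [^]\<^bsub>G\<^esub> (n::nat) = a [^]\<^bsub>FB k\<^esub> n" for a n
    unfolding G_def PFB_def pow_upd ..
  have Hsub: "H \<subseteq> carrier (FB k)" using subgroup.subset[OF assms(2)] by (auto simp: PFB_carrier)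
  obtain m :: nat where m: "1 \<le> m" "xx k [^]\<^bsub>FB k\<^esub> m \<in> H"
    using power_in_H[OF k4 assms(2) assms(3)] by blast
  define x where "x = xx k [^]\<^bsub>FB k\<^esub> m"
  have xG: "x \<in> carrier G" using m(2) cG by (simp add: x_def)
  have xc: "xx k \<in> carrier (FB k)" by (rule xx_carrier[OF k4])
  have KP: "\<forall>h\<in>carrier G. \<forall>t::nat\<ge>1. h \<otimes>\<^bsub>G\<^esub> x [^]\<^bsub>G\<^esub> t = x [^]\<^bsub>G\<^esub> t \<otimes>\<^bsub>G\<^esub> h \<longrightarrow>
       h = \<one>\<^bsub>G\<^esub> \<or> (\<exists>c::nat\<ge>1. h [^]\<^bsub>G\<^esub> m = x [^]\<^bsub>G\<^esub> c \<or> h [^]\<^bsub>G\<^esub> m \<otimes>\<^bsub>G\<^esub> x [^]\<^bsub>G\<^esub> c = \<one>\<^bsub>G\<^esub>)"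
  proof (intro ballI allI impI)
    fix h and t :: nat assume h: "h \<in> carrier G" and t: "1 \<le> t"
      and c: "h \<otimes>\<^bsub>G\<^esub> x [^]\<^bsub>G\<^esub> t = x [^]\<^bsub>G\<^esub> t \<otimes>\<^bsub>G\<^esub> h"
    have hF: "h \<in> carrier (FB k)" using h cG Hsub by blast
    have c': "h \<otimes>\<^bsub>FB k\<^esub> (xx k [^]\<^bsub>FB k\<^esub> m) [^]\<^bsub>FB k\<^esub> t = (xx k [^]\<^bsub>FB k\<^esub> m) [^]\<^bsub>FB k\<^esub> t \<otimes>\<^bsub>FB k\<^esub> h"
      using c unfolding mG pG x_def .
    from KP_FB[OF k4 m(1) hF t c']
    show "h = \<one>\<^bsub>G\<^esub> \<or> (\<exists>c::nat\<ge>1. h [^]\<^bsub>G\<^esub> m = x [^]\<^bsub>G\<^esub> c \<or> h [^]\<^bsub>G\<^esub> m \<otimes>\<^bsub>G\<^esub> x [^]\<^bsub>G\<^esub> c = \<one>\<^bsub>G\<^esub>)"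
      unfolding mG oG pG x_def .
  qed
  have xinf: "x [^]\<^bsub>G\<^esub> s \<noteq> \<one>\<^bsub>G\<^esub>" if "1 \<le> s" for s :: nat
  proof -
    have "x [^]\<^bsub>G\<^esub> s = xx k [^]\<^bsub>FB k\<^esub> (m * s)" unfolding pG x_def using FB.nat_pow_pow[OF xc] by simp
    moreover have "1 \<le> m * s" using m(1) that by simp
    ultimately show ?thesis using xx_inf_order[OF k4] oG by simp
  qed
  interpret GG: group G by (rule gG)
  have gAB: "group (A \<times>\<times> B)" by (rule DirProd_group[OF assms(4) assms(5)])
  interpret GH: group_hom G "A \<times>\<times> B" \<phi>
    by (rule group_hom.intro[OF gG gAB]) (use phi in \<open>simp add: group_hom_axioms_def iso_def G_def\<close>)
  have phiG: "\<phi> \<in> iso G (A \<times>\<times> B)" using phi by (simp add: G_def)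
  obtain ga gb where g: "\<phi> x = (ga, gb)" "ga \<in> carrier A" "gb \<in> carrier B"
    using GH.hom_closed[OF xG] by (cases "\<phi> x") auto
  interpret A: group A by (rule assms(4))
  interpret B: group B by (rule assms(5))
  have "(\<forall>s::nat\<ge>1. gb [^]\<^bsub>B\<^esub> s \<noteq> \<one>\<^bsub>B\<^esub>) \<or> (\<forall>s::nat\<ge>1. ga [^]\<^bsub>A\<^esub> s \<noteq> \<one>\<^bsub>A\<^esub>)"
  proof (rule ccontr)
    assume "\<not> ?thesis"
    then obtain s1 s2 :: nat where s: "1 \<le> s1" "gb [^]\<^bsub>B\<^esub> s1 = \<one>\<^bsub>B\<^esub>" "1 \<le> s2" "ga [^]\<^bsub>A\<^esub> s2 = \<one>\<^bsub>A\<^esub>"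
      by blast
    have "\<phi> (x [^]\<^bsub>G\<^esub> (s2 * s1)) = (ga [^]\<^bsub>A\<^esub> (s2 * s1), gb [^]\<^bsub>B\<^esub> (s2 * s1))"
      using GH.hom_nat_pow[OF xG] g(1) DirProd_pow by metis
    also have "\<dots> = (\<one>\<^bsub>A\<^esub>, \<one>\<^bsub>B\<^esub>)"
      using A.nat_pow_pow[OF g(2), of s2 s1, symmetric] B.nat_pow_pow[OF g(3), of s1 s2, symmetric] s
      by (simp add: mult.commute)
    also have "\<dots> = \<phi> \<one>\<^bsub>G\<^esub>" by simp
    finally have e: "\<phi> (x [^]\<^bsub>G\<^esub> (s2 * s1)) = \<phi> \<one>\<^bsub>G\<^esub>" .
    have inj: "inj_on \<phi> (carrier G)" using phiG by (simp add: iso_def bij_betw_def)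
    have "x [^]\<^bsub>G\<^esub> (s2 * s1) = \<one>\<^bsub>G\<^esub>"
      by (rule inj_onD[OF inj e GG.nat_pow_closed[OF xG] GG.one_closed])
    moreover have "1 \<le> s2 * s1" using s by simp
    ultimately show False using xinf by blast
  qed
  then show False
  proof
    assume "\<forall>s::nat\<ge>1. gb [^]\<^bsub>B\<^esub> s \<noteq> \<one>\<^bsub>B\<^esub>"
    then have "\<forall>s::nat\<ge>1. snd (\<phi> x) [^]\<^bsub>B\<^esub> s \<noteq> \<one>\<^bsub>B\<^esub>" using g by simp
    from core[OF gG assms(4) assms(5) phiG xG assms(6) this KP] show False .
  next
    assume ai: "\<forall>s::nat\<ge>1. ga [^]\<^bsub>A\<^esub> s \<noteq> \<one>\<^bsub>A\<^esub>"
    define \<psi> where "\<psi> = (\<lambda>(a, b). (b, a)) \<circ> \<phi>"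
    have psi: "\<psi> \<in> iso G (B \<times>\<times> A)"
      unfolding \<psi>_def by (rule iso_set_trans[OF phiG DirProd_commute_iso_set])
    have "\<forall>s::nat\<ge>1. snd (\<psi> x) [^]\<^bsub>A\<^esub> s \<noteq> \<one>\<^bsub>A\<^esub>" using g ai by (simp add: \<psi>_def)
    from core[OF gG assms(5) assms(4) psi xG assms(7) this KP] show False .
  qed
qed


end
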